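(* Let $E$ be a complex vector bundle over a topological space $X$, and for $k\geq 1$ let $b^{(k)}_{\lambda}\in\mathbb{Q}$ be the universal rational coefficients defined by $$ch\big(\gamma^k(\widetilde{E})\big)=\sum_{\lambda}b^{(k)}_{\lambda}\, c_{\lambda}(E),$$ the sum running over all integer partitions $\lambda$. Fix an integer partition $\lambda=(\lambda_1,\ldots,\lambda_{l(\lambda)})=(1^{m_1(\lambda)}2^{m_2(\lambda)}\cdots)$. Then $$\sum_{k\geq1}b^{(k)}_{\lambda}\, t^k=\frac{(-1)^{|\lambda|-l(\lambda)}}{\prod_{i\geq1}m_i(\lambda)!}\sum_{\pi\in\Pi_{l(\lambda)}}\bigg\{\Big[\prod_{i=1}^{l(\pi)}(|\pi_i|-1)!\Big]\Big[\prod_{i=1}^{l(\pi)}\sum_{j=0}^{\lambda_{\pi_i}-1}\frac{S(\lambda_{\pi_i},\lambda_{\pi_i}-j)}{\binom{\lambda_{\pi_i}-1}{j}\cdot j!}(-t)^{\lambda_{\pi_i}-1-j}\Big]t^{l(\pi)}\bigg\},$$ i.e. $b^{(k)}_{\lambda}$ is the coefficient of $t^k$ on the right-hand side.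
   Context: For complex vector bundles $E,F$, $\wedge_t(E):=1+\sum_{k\geq1}\wedge^k(E)t^k$ (exterior powers), extended to virtual bundles by $\wedge_t(E-F)=\wedge_t(E)[\wedge_t(F)]^{-1}\in K(X)[[t]]$. The operations $\gamma^k$ are defined by $1+\sum_{k\geq1}\gamma^k(E-F)t^k:=\wedge_{t/(1-t)}(E-F)$. $\widetilde{E}:=E-\underline{\mathbb{C}}^{\dim E}$ (subtracting the trivial bundle of the same rank). $ch$ is the Chern character. For an integer partition $\lambda=(\lambda_1\geq\cdots\geq\lambda_l>0)$: $l(\lambda)=l$ is its length, $|\lambda|=\sum\lambda_i$ its weight, $m_i(\lambda)$ the number of parts equal to $i$, and $c_\lambda(E):=\prod_{i=1}^{l(\lambda)}c_{\lambda_i}(E)$. $\Pi_n$ is the set of all set partitions of $[n]=\{1,\ldots,n\}$ into disjoint nonempty blocks; for $\pi=\{\pi_1,\ldots,\pi_{l(\pi)}\}\in\Pi_{l(\lambda)}$, $l(\pi)$ is the number of blocks, $|\pi_i|$ the cardinality of a block, and $\lambda_{\pi_i}:=\sum_{j\in\pi_i}\lambda_j$. $S(n,k)$ is the Stirling number of the second kind (number of partitions of $[n]$ into exactly $k$ blocks), with $S(n,k)=0$ if $k>n$, $S(n,0)=0$ for $n>0$, $S(0,0)=1$. *)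

theory Defs
  imports "HOL-Computational_Algebra.Computational_Algebra" "HOL-Combinatorics.Stirling"
          "HOL-Library.Disjoint_Sets"
begin

definition is_partition :: "nat list \<Rightarrow> bool" where
  "is_partition lam \<longleftrightarrow> sorted_wrt (\<ge>) lam \<and> 0 \<notin> set lam"

definition partitions_of :: "nat \<Rightarrow> nat list set" where
  "partitions_of m = {lam. is_partition lam \<and> sum_list lam = m}"

definition esym :: "nat \<Rightarrow> nat \<Rightarrow> (nat \<Rightarrow> 'a::comm_semiring_1) \<Rightarrow> 'a" where
  "esym n k y = (\<Sum>S\<in>{S. S \<subseteq> {..<n} \<and> card S = k}. \<Prod>i\<in>S. y i)"

(* c_lambda evaluated at Chern roots x_0..x_{n-1}: prod_i e_{lambda_i}(x) *)
definition c_part :: "nat \<Rightarrow> nat list \<Rightarrow> (nat \<Rightarrow> real) \<Rightarrow> real" where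
  "c_part n lam x = (\<Prod>j<length lam. esym n (lam ! j) x)"

(* Splitting principle: for E with Chern roots x_i (line bundles L_i, c_1(L_i)=x_i),
   gamma^k(E~) = e_k(L_0 - 1, ..., L_{n-1} - 1), hence
   ch(gamma^k(E~)) = e_k(e^{x_0}-1,...,e^{x_{n-1}}-1).  Its homogeneous degree-m part
   is the coefficient of s^m of e_k(e^{s x_0}-1, ..., e^{s x_{n-1}}-1) as a power series in s.
   b is the family of universal coefficients iff for every rank n and all roots x,
   degree-m part of ch(gamma^k(E~)) = sum over partitions mu of m of b^(k)_mu c_mu(E). *)
definition ch_gamma_coeffs :: "(nat \<Rightarrow> nat list \<Rightarrow> rat) \<Rightarrow> bool" where
  "ch_gamma_coeffs b \<longleftrightarrow>
     (\<forall>k\<ge>1. \<forall>n m. \<forall>x::nat \<Rightarrow> real.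
        fps_nth (esym n k (\<lambda>i. fps_exp (x i) - 1)) m
          = (\<Sum>mu\<in>partitions_of m. of_rat (b k mu) * c_part n mu x))"

definition inner_poly :: "nat \<Rightarrow> rat poly" where
  "inner_poly a = (\<Sum>j<a. smult (of_nat (Stirling a (a - j)) /
        (of_nat ((a - 1) choose j) * of_nat (fact j))) ([:0, -1:] ^ (a - 1 - j)))"

(* lambda_{B} = sum of parts indexed by block B (0-indexed) *)
definition block_weight :: "nat list \<Rightarrow> nat set \<Rightarrow> nat" where
  "block_weight lam B = (\<Sum>j\<in>B. lam ! j)"

definition rhs_poly :: "nat list \<Rightarrow> rat poly" where
  "rhs_poly lam =
     smult ((-1) ^ (sum_list lam - length lam) /
            (\<Prod>i\<in>set lam. of_nat (fact (count_list lam i))))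
       (\<Sum>P\<in>{P. partition_on {..<length lam} P}.
          smult (\<Prod>B\<in>P. of_nat (fact (card B - 1)))
            ((\<Prod>B\<in>P. inner_poly (block_weight lam B)) * monom 1 (card P)))"

end

theory Submission
  imports Defs "HOL-Combinatorics.Multiset_Permutations" "HOL-Combinatorics.Permutations"
begin
lemma esym_0[simp]: "esym n 0 y = 1"
proof -
  have "S = {}" if "S \<subseteq> {..<n}" "card S = 0" for S :: "nat set"
    using finite_subset[OF that(1)] that(2) by simp
  then have "{S. S \<subseteq> {..<n} \<and> card S = 0} = {{}}" by auto
  then show ?thesis by (simp add: esym_def)
qed

lemma esym_gt: "n < k \<Longrightarrow> esym n k y = 0"
proof -
  assume "n < k"
  have "card S \<noteq> k" if "S \<subseteq> {..<n}" for S :: "nat set"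
    by (metis \<open>n < k\<close> card_lessThan card_mono finite_lessThan leD that)
  then have E: "{S. S \<subseteq> {..<n} \<and> card S = k} = {}" by blast
  show ?thesis unfolding esym_def E by simp
qed

lemma esym_cong: "(\<And>i. i < n \<Longrightarrow> y i = z i) \<Longrightarrow> esym n k y = esym n k z"
  unfolding esym_def by (intro sum.cong refl prod.cong) auto

lemma esym_Suc: "esym (Suc n) (Suc k) y = esym n (Suc k) y + y n * esym n k y"
proof -
  let ?A = "{S. S \<subseteq> {..<n} \<and> card S = Suc k}"
  let ?B = "{S. S \<subseteq> {..<n} \<and> card S = k}"
  have eq: "{S. S \<subseteq> {..<Suc n} \<and> card S = Suc k} = ?A \<union> insert n ` ?B"
  proof (intro equalityI subsetI)
    fix S assume S: "S \<in> {S. S \<subseteq> {..<Suc n} \<and> card S = Suc k}"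
    show "S \<in> ?A \<union> insert n ` ?B"
    proof (cases "n \<in> S")
      case True
      have fin: "finite S" using S finite_subset by blast
      have "S = insert n (S - {n})" using True by blast
      moreover have "S - {n} \<in> ?B" using S True fin by (auto simp: less_Suc_eq)
      ultimately show ?thesis by blast
    next
      case False
      then show ?thesis using S by (auto simp: less_Suc_eq)
    qed
  next
    fix S assume "S \<in> ?A \<union> insert n ` ?B"
    then show "S \<in> {S. S \<subseteq> {..<Suc n} \<and> card S = Suc k}"
    proof
      assume "S \<in> ?A" then show ?thesis by auto
    next
      assume "S \<in> insert n ` ?B"
      then obtain T where T: "T \<in> ?B" "S = insert n T" by blast
      have "finite T" using T finite_subset by blast
      moreover have "n \<notin> T" using T by auto
      ultimately show ?thesis using T by auto
    qed
  qed
  have fA: "finite ?A" by (rule finite_subset[of _ "Pow {..<n}"]) auto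
  have fB: "finite ?B" by (rule finite_subset[of _ "Pow {..<n}"]) auto
  have disj: "?A \<inter> insert n ` ?B = {}" by auto
  have inj: "inj_on (insert n) ?B"
    by (rule inj_onI) (metis (no_types, lifting) Diff_insert_absorb lessThan_iff mem_Collect_eq nat_less_le subset_iff)
  have "esym (Suc n) (Suc k) y = (\<Sum>S\<in>?A. \<Prod>i\<in>S. y i) + (\<Sum>S\<in>insert n ` ?B. \<Prod>i\<in>S. y i)"
    unfolding esym_def eq using fA fB disj by (simp add: sum.union_disjoint)
  also have "(\<Sum>S\<in>insert n ` ?B. \<Prod>i\<in>S. y i) = (\<Sum>S\<in>?B. \<Prod>i\<in>insert n S. y i)"
    using inj by (simp add: sum.reindex)
  also have "\<dots> = (\<Sum>S\<in>?B. y n * (\<Prod>i\<in>S. y i))"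
  proof (intro sum.cong refl)
    fix S assume "S \<in> ?B"
    then have "finite S" "n \<notin> S" using finite_subset by auto
    then show "(\<Prod>i\<in>insert n S. y i) = y n * (\<Prod>i\<in>S. y i)" by simp
  qed
  finally show ?thesis by (simp add: esym_def sum_distrib_left)
qed

lemma esym_Suc': "k \<ge> 1 \<Longrightarrow> esym (Suc n) k y = esym n k y + y n * esym n (k - 1) y"
  using esym_Suc[of n "k - 1" y] by simp

lemma esym_gen: "(\<Prod>i<n. 1 + t * y i) = (\<Sum>k\<le>n. t^k * esym n k y)"
proof (induction n)
  case 0
  then show ?case by simp
next
  case (Suc n)
  have "(\<Prod>i<Suc n. 1 + t * y i) = (\<Sum>k\<le>n. t^k * esym n k y) * (1 + t * y n)"
    using Suc by simp
  also have "\<dots> = (\<Sum>k\<le>n. t^k * esym n k y) + (\<Sum>k\<le>n. t^k * esym n k y) * (t * y n)"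
    by (simp add: distrib_left)
  also have "(\<Sum>k\<le>n. t^k * esym n k y) * (t * y n) = (\<Sum>k\<le>n. t^Suc k * (y n * esym n k y))"
    by (simp add: sum_distrib_left sum_distrib_right mult_ac)
  also have "(\<Sum>k\<le>n. t^k * esym n k y) = (\<Sum>k\<le>Suc n. t^k * esym n k y)"
    by (simp add: esym_gt)
  also have "(\<Sum>k\<le>n. t^Suc k * (y n * esym n k y)) = (\<Sum>k\<le>Suc n. if k = 0 then 0 else t^k * (y n * esym n (k - 1) y))"
    by (subst sum.atMost_Suc_shift) simp
  also have "(\<Sum>k\<le>Suc n. t^k * esym n k y) + \<dots> = (\<Sum>k\<le>Suc n. t^k * esym (Suc n) k y)"
    by (subst sum.distrib[symmetric], intro sum.cong refl) (auto simp: esym_Suc' algebra_simps)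
  finally show ?case .
qed

lemma c_part_prod_list: "c_part n lam x = prod_list (map (\<lambda>a. esym n a x) lam)"
proof -
  have h: "prod_list xs = (\<Prod>j<length xs. xs ! j)" for xs :: "real list"
    by (induction xs) (simp_all del: prod.lessThan_Suc add: prod.lessThan_Suc_shift)
  show ?thesis unfolding c_part_def h by simp
qed

definition sh :: "nat list \<Rightarrow> nat list" where
  "sh mu = filter (\<lambda>a. a \<noteq> 0) (map (\<lambda>a. a - 1) mu)"

lemma c_part_sh: "c_part n (sh mu) x = prod_list (map (\<lambda>a. esym n (a - 1) x) mu)"
  unfolding c_part_prod_list sh_def by (induction mu) auto

lemma is_partition_sh: "is_partition mu \<Longrightarrow> is_partition (sh mu)"
proof -
  assume a: "is_partition mu"
  have "sorted_wrt (\<ge>) (map (\<lambda>a. a - 1) mu)"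
    using a unfolding is_partition_def sorted_wrt_map by (auto elim!: sorted_wrt_mono_rel[rotated])
  then have "sorted_wrt (\<ge>) (sh mu)" unfolding sh_def by (rule sorted_wrt_filter)
  then show ?thesis unfolding is_partition_def sh_def by auto
qed

lemma partition_mset_inj:
  assumes "is_partition mu" "is_partition nu" "mset mu = mset nu"
  shows "mu = nu"
proof -
  have s1: "sorted (rev mu)" "sorted (rev nu)"
    using assms(1,2) by (auto simp: is_partition_def sorted_wrt_rev)
  have "sort mu = rev mu" by (rule properties_for_sort) (use s1 in auto)
  moreover have "sort mu = rev nu" by (rule properties_for_sort) (use s1 assms(3) in auto)
  ultimately show ?thesis by simp
qed

lemma map_Suc_sh: "0 \<notin> set mu \<Longrightarrow> map Suc (sh mu) = filter (\<lambda>a. a \<noteq> 1) mu"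
  unfolding sh_def by (induction mu) auto

lemma mset_from_sh:
  assumes "0 \<notin> set mu"
  shows "mset mu = mset (map Suc (sh mu)) + replicate_mset (length mu - length (sh mu)) 1"
proof -
  have "mset mu = mset (filter (\<lambda>a. a \<noteq> 1) mu) + mset (filter (\<lambda>a. a = 1) mu)"
    using multiset_partition[of "mset mu" "\<lambda>a. a \<noteq> 1"] by (simp add: mset_filter)
  moreover have "filter (\<lambda>a. a = 1) mu = replicate (length (filter (\<lambda>a. a = 1) mu)) 1"
    by (induction mu) auto
  moreover have "length (filter (\<lambda>a. a = 1) mu) = length mu - length (sh mu)"
  proof -
    have "length (sh mu) = length (filter (\<lambda>a. a \<noteq> 1) mu)"
      using map_Suc_sh[OF assms] by (metis length_map)
    moreover have "length (filter (\<lambda>a. a \<noteq> 1) mu) + length (filter (\<lambda>a. a = 1) mu) = length mu"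
      using sum_length_filter_compl[of "\<lambda>a. a = 1" mu] by simp
    ultimately show ?thesis by simp
  qed
  ultimately show ?thesis using map_Suc_sh[OF assms] by (metis mset_replicate)
qed

lemma sh_inj:
  assumes "is_partition mu" "is_partition nu" "length mu = length nu" "sh mu = sh nu"
  shows "mu = nu"
proof -
  have "0 \<notin> set mu" "0 \<notin> set nu" using assms(1,2) by (auto simp: is_partition_def)
  then have "mset mu = mset nu" using mset_from_sh assms(3,4) by metis
  then show ?thesis using partition_mset_inj assms(1,2) by blast
qed

lemma prod_lin_coeff:
  "degree (\<Prod>j<L. [:a j, b j:]) \<le> L \<and> coeff (\<Prod>j<L. [:a j, b j:]) L = (\<Prod>j<L. b j)"
proof (induction L)
  case 0
  then show ?case by simp
next
  case (Suc L)
  let ?p = "\<Prod>j<L. [:a j, b j:]"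
  have eq: "(\<Prod>j<Suc L. [:a j, b j:]) = smult (a L) ?p + pCons 0 (smult (b L) ?p)"
    by (simp add: mult_pCons_right)
  have "coeff ?p (Suc L) = 0" using Suc by (simp add: coeff_eq_0)
  then have c: "coeff (\<Prod>j<Suc L. [:a j, b j:]) (Suc L) = (\<Prod>j<Suc L. b j)"
    unfolding eq using Suc by (simp add: mult.commute)
  have d1: "degree (smult (a L) ?p) \<le> L" using Suc degree_smult_le order_trans by blast
  have d2: "degree (smult (b L) ?p) \<le> L" using Suc degree_smult_le order_trans by blast
  have "degree (pCons 0 (smult (b L) ?p)) \<le> Suc L"
    using degree_pCons_le[of 0 "smult (b L) ?p"] d2 by linarith
  moreover have "degree (smult (a L) ?p) \<le> Suc L" using d1 by linarith
  ultimately have "degree (\<Prod>j<Suc L. [:a j, b j:]) \<le> Suc L"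
    unfolding eq by (rule degree_add_le[rotated])
  then show ?case using c by simp
qed

lemma prod_list_map_nth: "prod_list (map f xs) = (\<Prod>j<length xs. f (xs ! j))"
  by (induction xs) (simp_all del: prod.lessThan_Suc add: prod.lessThan_Suc_shift)

lemma poly_lin_eval:
  assumes "\<forall>a\<in>set mu. a \<ge> 1"
  shows "poly (\<Prod>j<length mu. [:esym n (mu!j) x, esym n (mu!j - 1) x:]) y = c_part (Suc n) mu (x(n := y))"
proof -
  have "esym (Suc n) (mu!j) (x(n := y)) = esym n (mu!j) x + y * esym n (mu!j - 1) x" if "j < length mu" for j
  proof -
    have "mu!j \<ge> 1" using assms that by auto
    then have "esym (Suc n) (mu!j) (x(n := y)) = esym n (mu!j) (x(n := y)) + y * esym n (mu!j - 1) (x(n := y))"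
      using esym_Suc'[of "mu!j" n "x(n := y)"] by simp
    moreover have "esym n k (x(n := y)) = esym n k x" for k by (rule esym_cong) auto
    ultimately show ?thesis by simp
  qed
  then show ?thesis unfolding c_part_def poly_prod by (intro prod.cong) (auto simp: algebra_simps)
qed

lemma indep_aux:
  "finite M \<Longrightarrow> (\<forall>mu\<in>M. is_partition mu \<and> (\<forall>a\<in>set mu. a \<le> n)) \<Longrightarrow>
   (\<forall>x. (\<Sum>mu\<in>M. a mu * c_part n mu x) = 0) \<Longrightarrow> mu \<in> M \<Longrightarrow> a mu = 0"
proof (induction n arbitrary: M a mu)
  case (0 M a mu)
  then have "\<forall>nu\<in>M. nu = []" unfolding is_partition_def
    by (metis le_zero_eq list.set_sel(1) neq_Nil_conv)
  then have "M = {[]}" using 0 by auto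
  then show ?case using 0 by (simp add: c_part_def)
next
  case (Suc n M0 a mu0)
  have main: "(\<forall>x. (\<Sum>mu\<in>M. a mu * c_part (Suc n) mu x) = 0) \<longrightarrow> (\<forall>mu\<in>M. a mu = 0)" if "M \<subseteq> M0" for M
    using finite_subset[OF that Suc.prems(1)] that
  proof (induction M rule: finite_psubset_induct)
    case (psubset M)
    show ?case
    proof (intro impI)
      assume zero: "\<forall>x. (\<Sum>mu\<in>M. a mu * c_part (Suc n) mu x) = 0"
      show "\<forall>mu\<in>M. a mu = 0"
    proof (cases "M = {}")
      case True then show ?thesis by simp
    next
      case False
      define L where "L = Max (length ` M)"
      have part: "\<forall>mu\<in>M. is_partition mu \<and> (\<forall>a\<in>set mu. a \<le> Suc n)" using psubset Suc.prems by blast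
      have pos: "\<forall>mu\<in>M. \<forall>a\<in>set mu. a \<ge> 1" using part unfolding is_partition_def
        by (metis less_one not_le)
      have lenL: "length mu \<le> L" if "mu \<in> M" for mu
        unfolding L_def using psubset(1) that by simp
      define MT where "MT = {mu\<in>M. length mu = L}"
      have inj: "inj_on sh MT" unfolding MT_def
        by (rule inj_onI) (use part sh_inj in auto)
      have S: "(\<Sum>nu\<in>sh ` MT. (a \<circ> the_inv_into MT sh) nu * c_part n nu x) = 0" for x
      proof -
        define P where "P mu = (\<Prod>j<length mu. [:esym n (mu!j) x, esym n (mu!j - 1) x:])" for mu
        define Q where "Q = (\<Sum>mu\<in>M. smult (a mu) (P mu))"
        have "poly Q y = 0" for y
        proof -
          have "poly Q y = (\<Sum>mu\<in>M. a mu * c_part (Suc n) mu (x(n := y)))"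
            unfolding Q_def P_def poly_sum using pos poly_lin_eval by (simp add: poly_lin_eval)
          then show ?thesis using zero by simp
        qed
        then have "Q = 0" using poly_all_0_iff_0 by blast
        then have "coeff Q L = 0" by simp
        moreover have "coeff Q L = (\<Sum>mu\<in>MT. a mu * c_part n (sh mu) x)"
        proof -
          have "coeff Q L = (\<Sum>mu\<in>M. a mu * coeff (P mu) L)" unfolding Q_def by (simp add: coeff_sum)
          also have "\<dots> = (\<Sum>mu\<in>M. if length mu = L then a mu * c_part n (sh mu) x else 0)"
          proof (intro sum.cong refl)
            fix mu assume mu: "mu \<in> M"
            have pl: "degree (P mu) \<le> length mu \<and> coeff (P mu) (length mu) = (\<Prod>j<length mu. esym n (mu!j - 1) x)"
              unfolding P_def by (rule prod_lin_coeff)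
            show "a mu * coeff (P mu) L = (if length mu = L then a mu * c_part n (sh mu) x else 0)"
            proof (cases "length mu = L")
              case True
              have "(\<Prod>j<length mu. esym n (mu!j - 1) x) = c_part n (sh mu) x"
                unfolding c_part_sh prod_list_map_nth ..
              then show ?thesis using pl True by simp
            next
              case False
              then have "length mu < L" using lenL mu by fastforce
              then have "coeff (P mu) L = 0" using pl by (simp add: coeff_eq_0)
              then show ?thesis using False by simp
            qed
          qed
          also have "\<dots> = (\<Sum>mu\<in>MT. a mu * c_part n (sh mu) x)"
            unfolding MT_def using psubset(1) by (simp add: sum.inter_filter)
          finally show ?thesis .
        qed
        ultimately have s0: "(\<Sum>mu\<in>MT. a mu * c_part n (sh mu) x) = 0" by simp
        have inj: "inj_on sh MT" unfolding MT_def
          by (rule inj_onI) (use part sh_inj in auto)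
        show ?thesis using s0 inj by (simp add: sum.reindex the_inv_into_f_f)
      qed
      have top: "\<forall>mu\<in>MT. a mu = 0"
      proof
        fix mu assume mu: "mu \<in> MT"
        have "(a \<circ> the_inv_into MT sh) (sh mu) = 0"
        proof (rule Suc.IH[of "sh ` MT"])
          show "finite (sh ` MT)" using psubset(1) unfolding MT_def by simp
          show "\<forall>mu\<in>sh ` MT. is_partition mu \<and> (\<forall>a\<in>set mu. a \<le> n)"
          proof
            fix nu assume "nu \<in> sh ` MT"
            then obtain mu where "mu \<in> MT" "nu = sh mu" by blast
            then show "is_partition nu \<and> (\<forall>a\<in>set nu. a \<le> n)"
              using part is_partition_sh unfolding MT_def sh_def by fastforce
          qed
          show "\<forall>x. (\<Sum>mu\<in>sh ` MT. (a \<circ> the_inv_into MT sh) mu * c_part n mu x) = 0" using S by blast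
          show "sh mu \<in> sh ` MT" using mu by blast
        qed
        then show "a mu = 0" using inj mu by (simp add: the_inv_into_f_f)
      qed
      have "L \<in> length ` M" unfolding L_def using psubset(1) False by simp
      then have ne: "MT \<noteq> {}" unfolding MT_def by auto
      have sub: "M - MT \<subset> M" using ne unfolding MT_def by blast
      have "\<forall>mu\<in>M - MT. a mu = 0"
      proof (rule psubset.IH[OF sub, THEN mp])
        show "M - MT \<subseteq> M0" using psubset by blast
        show "\<forall>x. (\<Sum>mu\<in>M - MT. a mu * c_part (Suc n) mu x) = 0"
        proof
          fix x
          have "(\<Sum>mu\<in>M. a mu * c_part (Suc n) mu x) = (\<Sum>mu\<in>M - MT. a mu * c_part (Suc n) mu x) + (\<Sum>mu\<in>MT. a mu * c_part (Suc n) mu x)"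
            using psubset(1) unfolding MT_def by (metis (no_types, lifting) Diff_subset mem_Collect_eq subsetI sum.subset_diff)
          then show "(\<Sum>mu\<in>M - MT. a mu * c_part (Suc n) mu x) = 0" using zero top by simp
        qed
      qed
      then show ?thesis using top by blast
    qed
    qed
  qed
  show ?case using main[of M0] Suc.prems(3,4) by blast
qed

definition comps :: "nat set \<Rightarrow> nat \<Rightarrow> (nat \<Rightarrow> nat) set" where
  "comps I m = {\<alpha>. (\<forall>i. i \<notin> I \<longrightarrow> \<alpha> i = 0) \<and> (\<Sum>i\<in>I. \<alpha> i) = m}"

definition res :: "nat set \<Rightarrow> (nat \<Rightarrow> nat) \<Rightarrow> nat \<Rightarrow> nat" where
  "res B \<alpha> = (\<lambda>i. if i \<in> B then \<alpha> i else 0)"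

lemma finite_comps:
  assumes "finite I" shows "finite (comps I m)"
proof -
  have "comps I m \<subseteq> (\<lambda>f i. if i \<in> I then f i else 0) ` (PiE I (\<lambda>_. {..m}))"
  proof
    fix \<alpha> assume a: "\<alpha> \<in> comps I m"
    have le: "\<alpha> i \<le> m" if "i \<in> I" for i
    proof -
      have "\<alpha> i \<le> (\<Sum>i\<in>I. \<alpha> i)" by (rule member_le_sum) (use that assms in auto)
      then show ?thesis using a unfolding comps_def by simp
    qed
    have "\<alpha> = (\<lambda>i. if i \<in> I then restrict \<alpha> I i else 0)"
      using a unfolding comps_def by auto
    moreover have "restrict \<alpha> I \<in> PiE I (\<lambda>_. {..m})" using le by auto
    ultimately show "\<alpha> \<in> (\<lambda>f i. if i \<in> I then f i else 0) ` (PiE I (\<lambda>_. {..m}))" by blast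
  qed
  moreover have "finite (PiE I (\<lambda>_. {..m}))" using assms by (simp add: finite_PiE)
  ultimately show ?thesis using finite_subset by blast
qed

lemma comps_split:
  fixes F G :: "(nat \<Rightarrow> nat) \<Rightarrow> real"
  assumes fin: "finite I" and BI: "B \<subseteq> I"
  shows "(\<Sum>\<alpha>\<in>comps I m. F (res B \<alpha>) * G (res (I - B) \<alpha>)) =
         (\<Sum>a\<le>m. (\<Sum>\<beta>\<in>comps B a. F \<beta>) * (\<Sum>\<gamma>\<in>comps (I - B) (m - a). G \<gamma>))"
proof -
  have finB: "finite B" using fin BI finite_subset by blast
  let ?T = "Sigma {..m} (\<lambda>a. comps B a \<times> comps (I - B) (m - a))"
  have "(\<Sum>a\<le>m. (\<Sum>\<beta>\<in>comps B a. F \<beta>) * (\<Sum>\<gamma>\<in>comps (I - B) (m - a). G \<gamma>))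
      = (\<Sum>a\<le>m. \<Sum>p\<in>comps B a \<times> comps (I - B) (m - a). F (fst p) * G (snd p))"
    by (intro sum.cong refl) (simp add: sum_product sum.cartesian_product case_prod_beta)
  also have "\<dots> = (\<Sum>q\<in>?T. F (fst (snd q)) * G (snd (snd q)))"
    by (subst sum.Sigma) (auto simp: finite_comps fin finB case_prod_beta)
  also have "\<dots> = (\<Sum>\<alpha>\<in>comps I m. F (res B \<alpha>) * G (res (I - B) \<alpha>))"
  proof (rule sum.reindex_bij_witness[of _ "\<lambda>\<alpha>. ((\<Sum>i\<in>B. \<alpha> i), res B \<alpha>, res (I - B) \<alpha>)" "\<lambda>q i. fst (snd q) i + snd (snd q) i"])
    fix \<alpha> assume a: "\<alpha> \<in> comps I m"
    then have z: "\<And>i. i \<notin> I \<Longrightarrow> \<alpha> i = 0" and s: "(\<Sum>i\<in>I. \<alpha> i) = m" unfolding comps_def by auto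
    show "(\<lambda>i. fst (snd ((\<Sum>i\<in>B. \<alpha> i), res B \<alpha>, res (I - B) \<alpha>)) i + snd (snd ((\<Sum>i\<in>B. \<alpha> i), res B \<alpha>, res (I - B) \<alpha>)) i) = \<alpha>"
      using z by (auto simp: res_def)
    have sB: "(\<Sum>i\<in>I. \<alpha> i) = (\<Sum>i\<in>B. \<alpha> i) + (\<Sum>i\<in>I - B. \<alpha> i)"
      using fin BI by (metis add.commute sum.subset_diff)
    have r1: "(\<Sum>i\<in>B. res B \<alpha> i) = (\<Sum>i\<in>B. \<alpha> i)" by (simp add: res_def)
    have r2: "(\<Sum>i\<in>I - B. res (I - B) \<alpha> i) = (\<Sum>i\<in>I - B. \<alpha> i)" by (simp add: res_def)
    show "((\<Sum>i\<in>B. \<alpha> i), res B \<alpha>, res (I - B) \<alpha>) \<in> ?T"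
      using sB s r1 r2 by (auto simp: comps_def res_def)
  next
    fix q assume q: "q \<in> ?T"
    obtain a \<beta> \<gamma> where qd: "q = (a, \<beta>, \<gamma>)" by (cases q) auto
    have am: "a \<le> m" and b: "\<beta> \<in> comps B a" and g: "\<gamma> \<in> comps (I - B) (m - a)" using q qd by auto
    have bz: "\<And>i. i \<notin> B \<Longrightarrow> \<beta> i = 0" and bs: "(\<Sum>i\<in>B. \<beta> i) = a" using b by (auto simp: comps_def)
    have gz: "\<And>i. i \<notin> I - B \<Longrightarrow> \<gamma> i = 0" and gs: "(\<Sum>i\<in>I - B. \<gamma> i) = m - a" using g by (auto simp: comps_def)
    have e1: "(\<Sum>i\<in>B. \<beta> i + \<gamma> i) = a" using bs gz by (simp add: sum.distrib)
    have e2: "res B (\<lambda>i. \<beta> i + \<gamma> i) = \<beta>" using bz gz by (auto simp: res_def)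
    have e3: "res (I - B) (\<lambda>i. \<beta> i + \<gamma> i) = \<gamma>" using bz gz by (auto simp: res_def)
    show "((\<Sum>i\<in>B. fst (snd q) i + snd (snd q) i), res B (\<lambda>i. fst (snd q) i + snd (snd q) i),
           res (I - B) (\<lambda>i. fst (snd q) i + snd (snd q) i)) = q"
      using e1 e2 e3 qd by simp
    show "F (res B (\<lambda>i. fst (snd q) i + snd (snd q) i)) * G (res (I - B) (\<lambda>i. fst (snd q) i + snd (snd q) i))
        = F (fst (snd q)) * G (snd (snd q))" using e2 e3 qd by simp
    have "(\<Sum>i\<in>I. \<beta> i + \<gamma> i) = (\<Sum>i\<in>I. \<beta> i) + (\<Sum>i\<in>I. \<gamma> i)" by (simp add: sum.distrib)
    also have "(\<Sum>i\<in>I. \<beta> i) = (\<Sum>i\<in>B. \<beta> i)"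
      using fin BI bz by (intro sum.mono_neutral_right) auto
    also have "(\<Sum>i\<in>I. \<gamma> i) = (\<Sum>i\<in>I - B. \<gamma> i)"
      using fin gz by (intro sum.mono_neutral_right) auto
    finally have "(\<Sum>i\<in>I. \<beta> i + \<gamma> i) = m" using bs gs am by simp
    then show "(\<lambda>i. fst (snd q) i + snd (snd q) i) \<in> comps I m"
      using bz gz qd BI by (auto simp: comps_def)
  qed
  finally show ?thesis ..
qed

lemma comps_reindex:
  fixes F :: "(nat \<Rightarrow> nat) \<Rightarrow> real"
  assumes bij: "bij_betw h J I"
  shows "(\<Sum>\<alpha>\<in>comps I m. F \<alpha>) = (\<Sum>\<beta>\<in>comps J m. F (\<lambda>i. if i \<in> I then \<beta> (inv_into J h i) else 0))"
proof (rule sum.reindex_bij_witness[symmetric, of _ "\<lambda>\<alpha> k. if k \<in> J then \<alpha> (h k) else 0" "\<lambda>\<beta> i. if i \<in> I then \<beta> (inv_into J h i) else 0"])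
  have hJ: "h ` J = I" and injh: "inj_on h J" using bij by (auto simp: bij_betw_def)
  have binv: "bij_betw (inv_into J h) I J" using bij by (rule bij_betw_inv_into)
  fix \<beta> assume b: "\<beta> \<in> comps J m"
  then have bz: "\<And>k. k \<notin> J \<Longrightarrow> \<beta> k = 0" and bs: "(\<Sum>k\<in>J. \<beta> k) = m" by (auto simp: comps_def)
  show "(\<lambda>k. if k \<in> J then (if h k \<in> I then \<beta> (inv_into J h (h k)) else 0) else 0) = \<beta>"
    using bz hJ injh by (auto simp: inv_into_f_f)
  have "(\<Sum>i\<in>I. \<beta> (inv_into J h i)) = (\<Sum>k\<in>J. \<beta> k)" by (rule sum.reindex_bij_betw[OF binv])
  then show "(\<lambda>i. if i \<in> I then \<beta> (inv_into J h i) else 0) \<in> comps I m"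
    using bs by (simp add: comps_def)
next
  have hJ: "h ` J = I" and injh: "inj_on h J" using bij by (auto simp: bij_betw_def)
  fix \<alpha> assume a: "\<alpha> \<in> comps I m"
  then have az: "\<And>k. k \<notin> I \<Longrightarrow> \<alpha> k = 0" and as: "(\<Sum>k\<in>I. \<alpha> k) = m" by (auto simp: comps_def)
  show "(\<lambda>i. if i \<in> I then (if inv_into J h i \<in> J then \<alpha> (h (inv_into J h i)) else 0) else 0) = \<alpha>"
    using az hJ by (auto simp: f_inv_into_f inv_into_into)
  have "(\<Sum>k\<in>J. \<alpha> (h k)) = (\<Sum>i\<in>I. \<alpha> i)" by (rule sum.reindex_bij_betw[OF bij])
  then show "(\<lambda>k. if k \<in> J then \<alpha> (h k) else 0) \<in> comps J m"
    using as by (simp add: comps_def)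
qed simp

lemma partition_on_image_inj:
  assumes "partition_on J P" "inj_on h J"
  shows "partition_on (h ` J) ((`) h ` P)"
proof -
  have "partition_on (h ` J) ((`) h ` P - {{}})" by (rule partition_on_inj_image[OF assms])
  moreover have "{} \<notin> (`) h ` P" using assms(1) partition_onD3 by fastforce
  ultimately show ?thesis by simp
qed

lemma part_reindex:
  fixes g :: "nat set \<Rightarrow> real"
  assumes bij: "bij_betw h J I"
  shows "(\<Sum>P | partition_on I P. \<Prod>B\<in>P. g B) = (\<Sum>P | partition_on J P. \<Prod>B\<in>P. g (h ` B))"
proof (rule sum.reindex_bij_witness[symmetric, of _ "\<lambda>P. (`) (inv_into J h) ` P" "\<lambda>P. (`) h ` P"])
  have hJ: "h ` J = I" and injh: "inj_on h J" using bij by (auto simp: bij_betw_def)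
  have binv: "bij_betw (inv_into J h) I J" using bij by (rule bij_betw_inv_into)
  have ij: "inv_into J h ` I = J" and inji: "inj_on (inv_into J h) I" using binv by (auto simp: bij_betw_def)
  {
    fix P assume "P \<in> {P. partition_on J P}"
    then have P: "partition_on J P" by simp
    have sub: "\<And>B. B \<in> P \<Longrightarrow> B \<subseteq> J" using P partition_onD1 by blast
    show "(`) (inv_into J h) ` (`) h ` P = P"
    proof -
      have "inv_into J h ` h ` B = B" if "B \<in> P" for B
        using sub[OF that] injh by (simp add: inv_into_image_cancel)
      then show ?thesis by (simp add: image_image)
    qed
    show "(`) h ` P \<in> {P. partition_on I P}"
      using partition_on_image_inj[OF P injh] hJ by simp
    have injP: "inj_on ((`) h) P"
      by (rule inj_onI) (metis sub injh inj_on_image_eq_iff)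
    show "(\<Prod>B\<in>(`) h ` P. g B) = (\<Prod>B\<in>P. g (h ` B))"
      by (simp add: prod.reindex[OF injP])
  }
  {
    fix P assume "P \<in> {P. partition_on I P}"
    then have P: "partition_on I P" by simp
    have sub: "B \<subseteq> I" if "B \<in> P" for B using P partition_onD1 that by blast
    show "(`) h ` (`) (inv_into J h) ` P = P"
    proof -
      have "h ` inv_into J h ` B = B" if "B \<in> P" for B
        by (rule image_inv_into_cancel[OF hJ sub[OF that]])
      then show ?thesis by (simp add: image_image)
    qed
    show "(`) (inv_into J h) ` P \<in> {P. partition_on J P}"
      using partition_on_image_inj[OF P inji] ij by simp
  }
qed

definition PS :: "(nat \<Rightarrow> nat \<Rightarrow> real) \<Rightarrow> nat set \<Rightarrow> (nat \<Rightarrow> nat) \<Rightarrow> real" where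
  "PS w I \<alpha> = (\<Sum>P | partition_on I P. \<Prod>B\<in>P. w (\<Sum>i\<in>B. \<alpha> i) (card B))"

lemma PS_reindex:
  assumes bij: "bij_betw h J I"
  shows "PS w I \<alpha> = PS w J (\<lambda>j. \<alpha> (h j))"
proof -
  have injh: "inj_on h J" using bij by (auto simp: bij_betw_def)
  have "PS w I \<alpha> = (\<Sum>P | partition_on J P. \<Prod>B\<in>P. w (\<Sum>i\<in>h ` B. \<alpha> i) (card (h ` B)))"
    unfolding PS_def by (rule part_reindex[OF bij])
  also have "\<dots> = PS w J (\<lambda>j. \<alpha> (h j))"
    unfolding PS_def
  proof (intro sum.cong refl prod.cong)
    fix P B assume "P \<in> {P. partition_on J P}" "B \<in> P"
    then have "B \<subseteq> J" using partition_onD1 by blast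
    then have ib: "inj_on h B" using injh inj_on_subset by blast
    show "w (\<Sum>i\<in>h ` B. \<alpha> i) (card (h ` B)) = w (\<Sum>j\<in>B. \<alpha> (h j)) (card B)"
      by (simp add: sum.reindex[OF ib] card_image[OF ib])
  qed
  finally show ?thesis .
qed

lemma part_remove_sum:
  fixes f :: "nat set \<Rightarrow> nat set set \<Rightarrow> real"
  assumes fin: "finite I"
  shows "(\<Sum>P | partition_on I P. \<Sum>B\<in>P. f B (P - {B})) =
         (\<Sum>B | B \<subseteq> I \<and> B \<noteq> {}. \<Sum>Q | partition_on (I - B) Q. f B Q)"
proof -
  have f1: "finite {P. partition_on I P}" using fin by (rule finitely_many_partition_on)
  have f2: "finite {B. B \<subseteq> I \<and> B \<noteq> {}}" by (rule finite_subset[of _ "Pow I"]) (use fin in auto)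
  have "(\<Sum>P | partition_on I P. \<Sum>B\<in>P. f B (P - {B})) = (\<Sum>q\<in>Sigma {P. partition_on I P} (\<lambda>P. P). f (snd q) (fst q - {snd q}))"
    using f1 fin finite_elements by (subst sum.Sigma) (auto simp: case_prod_beta)
  also have "\<dots> = (\<Sum>q\<in>Sigma {B. B \<subseteq> I \<and> B \<noteq> {}} (\<lambda>B. {Q. partition_on (I - B) Q}). f (fst q) (snd q))"
  proof (rule sum.reindex_bij_witness[of _ "\<lambda>q. (insert (fst q) (snd q), fst q)" "\<lambda>q. (snd q, fst q - {snd q})"])
    fix q assume "q \<in> Sigma {P. partition_on I P} (\<lambda>P. P)"
    then obtain P B where q: "q = (P, B)" and P: "partition_on I P" and B: "B \<in> P" by auto
    have d: "disjnt B (\<Union>(P - {B}))"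
      using P B unfolding partition_on_def disjoint_def disjnt_def by blast
    have ins: "insert B (P - {B}) = P" using B by blast
    have "partition_on (I - B) (P - {B}) \<and> B \<subseteq> I \<and> B \<noteq> {}"
      using partition_on_insert[OF d, of I] P ins by simp
    then show "(snd q, fst q - {snd q}) \<in> Sigma {B. B \<subseteq> I \<and> B \<noteq> {}} (\<lambda>B. {Q. partition_on (I - B) Q})"
      using q by simp
    show "(insert (fst (snd q, fst q - {snd q})) (snd (snd q, fst q - {snd q})), fst (snd q, fst q - {snd q})) = q"
      using q ins by simp
    show "f (fst (snd q, fst q - {snd q})) (snd (snd q, fst q - {snd q})) = f (snd q) (fst q - {snd q})" by simp
  next
    fix q assume "q \<in> Sigma {B. B \<subseteq> I \<and> B \<noteq> {}} (\<lambda>B. {Q. partition_on (I - B) Q})"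
    then obtain B Q where q: "q = (B, Q)" and B: "B \<subseteq> I" "B \<noteq> {}" and Q: "partition_on (I - B) Q" by auto
    have U: "\<Union>Q = I - B" using Q partition_onD1 by blast
    have d: "disjnt B (\<Union>Q)" using U by (simp add: disjnt_def)
    have nB: "B \<notin> Q" using U B(2) by blast
    have "partition_on I (insert B Q)" using partition_on_insert[OF d, of I] Q B by simp
    then show "(insert (fst q) (snd q), fst q) \<in> Sigma {P. partition_on I P} (\<lambda>P. P)" using q by simp
    show "(snd (insert (fst q) (snd q), fst q), fst (insert (fst q) (snd q), fst q) - {snd (insert (fst q) (snd q), fst q)}) = q"
      using q nB by auto
  qed
  also have "\<dots> = (\<Sum>B | B \<subseteq> I \<and> B \<noteq> {}. \<Sum>Q | partition_on (I - B) Q. f B Q)"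
    using f2 fin by (subst sum.Sigma) (auto intro: finitely_many_partition_on simp: case_prod_beta)
  finally show ?thesis .
qed

definition ew :: "(nat \<Rightarrow> real) \<Rightarrow> nat set \<Rightarrow> (nat \<Rightarrow> nat) \<Rightarrow> real" where
  "ew e I \<alpha> = (\<Prod>i\<in>I. e (\<alpha> i))"

definition Zs :: "(nat \<Rightarrow> nat \<Rightarrow> real) \<Rightarrow> (nat \<Rightarrow> real) \<Rightarrow> nat set \<Rightarrow> nat \<Rightarrow> real" where
  "Zs w e I m = (\<Sum>\<alpha>\<in>comps I m. PS w I \<alpha> * ew e I \<alpha>)"

definition Gs :: "(nat \<Rightarrow> real) \<Rightarrow> nat set \<Rightarrow> nat \<Rightarrow> real" where
  "Gs e B a = (\<Sum>\<beta>\<in>comps B a. ew e B \<beta>)"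

lemma PS_cong: "(\<And>i. i \<in> I \<Longrightarrow> \<alpha> i = \<beta> i) \<Longrightarrow> PS w I \<alpha> = PS w I \<beta>"
  unfolding PS_def
proof (intro sum.cong refl prod.cong)
  fix P B assume h: "\<And>i. i \<in> I \<Longrightarrow> \<alpha> i = \<beta> i" and "P \<in> {P. partition_on I P}" "B \<in> P"
  then have "B \<subseteq> I" using partition_onD1 by blast
  then show "w (\<Sum>i\<in>B. \<alpha> i) (card B) = w (\<Sum>i\<in>B. \<beta> i) (card B)" using h by (metis (no_types, lifting) subsetD sum.cong)
qed

lemma ew_cong: "(\<And>i. i \<in> I \<Longrightarrow> \<alpha> i = \<beta> i) \<Longrightarrow> ew e I \<alpha> = ew e I \<beta>"
  unfolding ew_def by simp

lemma Zs_rec: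
  assumes fin: "finite I"
  shows "of_nat m * Zs w e I m = (\<Sum>B | B \<subseteq> I \<and> B \<noteq> {}. \<Sum>a\<le>m. (of_nat a * w a (card B) * Gs e B a) * Zs w e (I - B) (m - a))"
proof -
  define X where "X B \<alpha> = of_nat (\<Sum>i\<in>B. \<alpha> i) * w (\<Sum>i\<in>B. \<alpha> i) (card B)" for B :: "nat set" and \<alpha> :: "nat \<Rightarrow> nat"
  define F where "F B \<beta> = X B \<beta> * ew e B \<beta>" for B \<beta>
  define G where "G B \<gamma> = PS w (I - B) \<gamma> * ew e (I - B) \<gamma>" for B \<gamma>
  have step1: "of_nat m * PS w I \<alpha> = (\<Sum>B | B \<subseteq> I \<and> B \<noteq> {}. X B \<alpha> * PS w (I - B) \<alpha>)"
    if a: "\<alpha> \<in> comps I m" for \<alpha>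
  proof -
    have "of_nat m * PS w I \<alpha> = (\<Sum>P | partition_on I P. \<Sum>B\<in>P. X B \<alpha> * (\<Prod>B'\<in>P - {B}. w (\<Sum>i\<in>B'. \<alpha> i) (card B')))"
      unfolding PS_def sum_distrib_left
    proof (intro sum.cong refl)
      fix P assume "P \<in> {P. partition_on I P}"
      then have P: "partition_on I P" by simp
      have finP: "finite P" using P fin finite_elements by blast
      have finB: "\<And>B. B \<in> P \<Longrightarrow> finite B" using P fin partition_onD1 finite_subset by (metis Union_upper)
      have "m = (\<Sum>i\<in>I. \<alpha> i)" using a by (simp add: comps_def)
      also have "\<dots> = (\<Sum>i\<in>\<Union>P. \<alpha> i)" using P partition_onD1 by metis
      also have "\<dots> = (\<Sum>B\<in>P. \<Sum>i\<in>B. \<alpha> i)"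
        using sum.Union_disjoint[of P \<alpha>] finB P by (auto simp: partition_on_def disjoint_def)
      finally have mP: "m = (\<Sum>B\<in>P. \<Sum>i\<in>B. \<alpha> i)" .
      have "of_nat m * (\<Prod>B\<in>P. w (\<Sum>i\<in>B. \<alpha> i) (card B)) = (\<Sum>B\<in>P. of_nat (\<Sum>i\<in>B. \<alpha> i) * (\<Prod>B\<in>P. w (\<Sum>i\<in>B. \<alpha> i) (card B)))"
        by (subst mP) (simp add: sum_distrib_right)
      also have "\<dots> = (\<Sum>B\<in>P. X B \<alpha> * (\<Prod>B'\<in>P - {B}. w (\<Sum>i\<in>B'. \<alpha> i) (card B')))"
      proof (intro sum.cong refl)
        fix B assume "B \<in> P"
        then have "(\<Prod>B\<in>P. w (\<Sum>i\<in>B. \<alpha> i) (card B)) = w (\<Sum>i\<in>B. \<alpha> i) (card B) * (\<Prod>B'\<in>P - {B}. w (\<Sum>i\<in>B'. \<alpha> i) (card B'))"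
          using finP by (simp add: prod.remove)
        then show "of_nat (\<Sum>i\<in>B. \<alpha> i) * (\<Prod>B\<in>P. w (\<Sum>i\<in>B. \<alpha> i) (card B)) = X B \<alpha> * (\<Prod>B'\<in>P - {B}. w (\<Sum>i\<in>B'. \<alpha> i) (card B'))"
          unfolding X_def by simp
      qed
      finally show "of_nat m * (\<Prod>B\<in>P. w (\<Sum>i\<in>B. \<alpha> i) (card B)) = (\<Sum>B\<in>P. X B \<alpha> * (\<Prod>B'\<in>P - {B}. w (\<Sum>i\<in>B'. \<alpha> i) (card B')))" .
    qed
    also have "\<dots> = (\<Sum>B | B \<subseteq> I \<and> B \<noteq> {}. \<Sum>Q | partition_on (I - B) Q. X B \<alpha> * (\<Prod>B'\<in>Q. w (\<Sum>i\<in>B'. \<alpha> i) (card B')))"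
      by (rule part_remove_sum[OF fin, of "\<lambda>B Q. X B \<alpha> * (\<Prod>B'\<in>Q. w (\<Sum>i\<in>B'. \<alpha> i) (card B'))"])
    also have "\<dots> = (\<Sum>B | B \<subseteq> I \<and> B \<noteq> {}. X B \<alpha> * PS w (I - B) \<alpha>)"
      unfolding PS_def by (simp add: sum_distrib_left)
    finally show ?thesis .
  qed
  have "of_nat m * Zs w e I m = (\<Sum>\<alpha>\<in>comps I m. \<Sum>B | B \<subseteq> I \<and> B \<noteq> {}. X B \<alpha> * PS w (I - B) \<alpha> * ew e I \<alpha>)"
    unfolding Zs_def sum_distrib_left
  proof (intro sum.cong refl)
    fix \<alpha> assume a: "\<alpha> \<in> comps I m"
    have "of_nat m * (PS w I \<alpha> * ew e I \<alpha>) = (of_nat m * PS w I \<alpha>) * ew e I \<alpha>" by (simp only: mult.assoc)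
    also have "\<dots> = (\<Sum>B | B \<subseteq> I \<and> B \<noteq> {}. X B \<alpha> * PS w (I - B) \<alpha>) * ew e I \<alpha>" by (simp only: step1[OF a])
    also have "\<dots> = (\<Sum>B | B \<subseteq> I \<and> B \<noteq> {}. X B \<alpha> * PS w (I - B) \<alpha> * ew e I \<alpha>)" by (simp only: sum_distrib_right)
    finally show "of_nat m * (PS w I \<alpha> * ew e I \<alpha>) = (\<Sum>B | B \<subseteq> I \<and> B \<noteq> {}. X B \<alpha> * PS w (I - B) \<alpha> * ew e I \<alpha>)" .
  qed
  also have "\<dots> = (\<Sum>B | B \<subseteq> I \<and> B \<noteq> {}. \<Sum>\<alpha>\<in>comps I m. F B (res B \<alpha>) * G B (res (I - B) \<alpha>))"
  proof (subst sum.swap, intro sum.cong refl)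
    fix B \<alpha> assume B: "B \<in> {B. B \<subseteq> I \<and> B \<noteq> {}}"
    have ews: "ew e I \<alpha> = ew e B \<alpha> * ew e (I - B) \<alpha>"
      unfolding ew_def using prod.subset_diff[of B I "\<lambda>i. e (\<alpha> i)"] B fin by (simp add: mult.commute)
    have "X B (res B \<alpha>) = X B \<alpha>" unfolding X_def res_def by simp
    moreover have "ew e B (res B \<alpha>) = ew e B \<alpha>" by (rule ew_cong) (simp add: res_def)
    moreover have "PS w (I - B) (res (I - B) \<alpha>) = PS w (I - B) \<alpha>" by (rule PS_cong) (simp add: res_def)
    moreover have "ew e (I - B) (res (I - B) \<alpha>) = ew e (I - B) \<alpha>" by (rule ew_cong) (simp add: res_def)
    ultimately show "X B \<alpha> * PS w (I - B) \<alpha> * ew e I \<alpha> = F B (res B \<alpha>) * G B (res (I - B) \<alpha>)"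
      unfolding F_def G_def ews by simp
  qed
  also have "\<dots> = (\<Sum>B | B \<subseteq> I \<and> B \<noteq> {}. \<Sum>a\<le>m. (\<Sum>\<beta>\<in>comps B a. F B \<beta>) * (\<Sum>\<gamma>\<in>comps (I - B) (m - a). G B \<gamma>))"
    by (intro sum.cong refl comps_split fin) simp
  also have "\<dots> = (\<Sum>B | B \<subseteq> I \<and> B \<noteq> {}. \<Sum>a\<le>m. (of_nat a * w a (card B) * Gs e B a) * Zs w e (I - B) (m - a))"
  proof (intro sum.cong refl)
    fix B a
    have "(\<Sum>\<beta>\<in>comps B a. F B \<beta>) = (\<Sum>\<beta>\<in>comps B a. of_nat a * w a (card B) * ew e B \<beta>)"
      by (intro sum.cong refl) (simp add: F_def X_def comps_def)
    then show "(\<Sum>\<beta>\<in>comps B a. F B \<beta>) * (\<Sum>\<gamma>\<in>comps (I - B) (m - a). G B \<gamma>) = of_nat a * w a (card B) * Gs e B a * Zs w e (I - B) (m - a)"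
      unfolding Gs_def Zs_def G_def by (simp add: sum_distrib_left)
  qed
  finally show ?thesis .
qed

lemma Zs_inv:
  assumes bij: "bij_betw h J I"
  shows "Zs w e I m = Zs w e J m"
proof -
  have hJ: "h ` J = I" and injh: "inj_on h J" using bij by (auto simp: bij_betw_def)
  have "Zs w e I m = (\<Sum>\<beta>\<in>comps J m. PS w I (\<lambda>i. if i \<in> I then \<beta> (inv_into J h i) else 0) * ew e I (\<lambda>i. if i \<in> I then \<beta> (inv_into J h i) else 0))"
    unfolding Zs_def by (rule comps_reindex[OF bij])
  also have "\<dots> = Zs w e J m" unfolding Zs_def
  proof (intro sum.cong refl)
    fix \<beta> assume "\<beta> \<in> comps J m"
    let ?a = "\<lambda>i. if i \<in> I then \<beta> (inv_into J h i) else 0"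
    have ah: "?a (h j) = \<beta> j" if "j \<in> J" for j using that hJ injh by (auto simp: inv_into_f_f)
    have "PS w I ?a = PS w J (\<lambda>j. ?a (h j))" by (rule PS_reindex[OF bij])
    also have "\<dots> = PS w J \<beta>" by (rule PS_cong) (simp add: ah)
    finally have 1: "PS w I ?a = PS w J \<beta>" .
    have "ew e I ?a = (\<Prod>j\<in>J. e (?a (h j)))" unfolding ew_def by (rule prod.reindex_bij_betw[OF bij, symmetric])
    also have "\<dots> = ew e J \<beta>" unfolding ew_def by (rule prod.cong) (simp_all add: ah)
    finally have 2: "ew e I ?a = ew e J \<beta>" .
    show "PS w I ?a * ew e I ?a = PS w J \<beta> * ew e J \<beta>" using 1 2 by simp
  qed
  finally show ?thesis .
qed

lemma Gs_inv:
  assumes bij: "bij_betw h J I"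
  shows "Gs e I m = Gs e J m"
proof -
  have hJ: "h ` J = I" and injh: "inj_on h J" using bij by (auto simp: bij_betw_def)
  have "Gs e I m = (\<Sum>\<beta>\<in>comps J m. ew e I (\<lambda>i. if i \<in> I then \<beta> (inv_into J h i) else 0))"
    unfolding Gs_def by (rule comps_reindex[OF bij])
  also have "\<dots> = Gs e J m" unfolding Gs_def
  proof (intro sum.cong refl)
    fix \<beta> assume "\<beta> \<in> comps J m"
    let ?a = "\<lambda>i. if i \<in> I then \<beta> (inv_into J h i) else 0"
    have ah: "?a (h j) = \<beta> j" if "j \<in> J" for j using that hJ injh by (auto simp: inv_into_f_f)
    have "ew e I ?a = (\<Prod>j\<in>J. e (?a (h j)))" unfolding ew_def by (rule prod.reindex_bij_betw[OF bij, symmetric])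
    also have "\<dots> = ew e J \<beta>" unfolding ew_def by (rule prod.cong) (simp_all add: ah)
    finally show "ew e I ?a = ew e J \<beta>" .
  qed
  finally show ?thesis .
qed

lemma Zs_card: "finite I \<Longrightarrow> Zs w e I m = Zs w e {..<card I} m"
  using ex_bij_betw_nat_finite[of I] Zs_inv by (metis atLeast0LessThan)

lemma Gs_card: "finite I \<Longrightarrow> Gs e I m = Gs e {..<card I} m"
  using ex_bij_betw_nat_finite[of I] Gs_inv by (metis atLeast0LessThan)

lemma ew_vanish:
  assumes e0: "e 0 = 0" and fin: "finite I" and a: "\<alpha> \<in> comps I m" and c: "m < card I"
  shows "ew e I \<alpha> = 0"
proof -
  have "\<exists>i\<in>I. \<alpha> i = 0"
  proof (rule ccontr)
    assume "\<not> ?thesis"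
    then have "\<forall>i\<in>I. 1 \<le> \<alpha> i" by (simp add: Suc_le_eq)
    then have "(\<Sum>i\<in>I. (1::nat)) \<le> (\<Sum>i\<in>I. \<alpha> i)" by (intro sum_mono) auto
    then have "card I \<le> m" using a by (simp add: comps_def)
    then show False using c by simp
  qed
  then show ?thesis unfolding ew_def using e0 fin by (metis prod_zero_iff)
qed

lemma Zs_vanish: "e 0 = 0 \<Longrightarrow> m < l \<Longrightarrow> Zs w e {..<l} m = 0"
  unfolding Zs_def by (intro sum.neutral ballI) (simp add: ew_vanish)

lemma Gs_vanish: "e 0 = 0 \<Longrightarrow> m < l \<Longrightarrow> Gs e {..<l} m = 0"
  unfolding Gs_def by (intro sum.neutral ballI) (simp add: ew_vanish)

lemma comps_single: "comps {r} k = {(\<lambda>i. if i = r then k else 0)}"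
  unfolding comps_def by auto

lemma Gs_power: "Gs e {..<r} a = (Abs_fps e ^ r) $ a"
proof (induction r arbitrary: a)
  case 0
  have "comps {} a = (if a = 0 then {\<lambda>i. 0} else {})" unfolding comps_def by auto
  then show ?case by (simp add: Gs_def ew_def)
next
  case (Suc r)
  have fin: "finite {..<Suc r}" by simp
  have sub: "{..<r} \<subseteq> {..<Suc r}" by auto
  have d: "{..<Suc r} - {..<r} = {r}" by auto
  have "Gs e {..<Suc r} a = (\<Sum>\<alpha>\<in>comps {..<Suc r} a. ew e {..<r} (res {..<r} \<alpha>) * (\<lambda>\<gamma>. e (\<gamma> r)) (res ({..<Suc r} - {..<r}) \<alpha>))"
    unfolding Gs_def
  proof (intro sum.cong refl)
    fix \<alpha>
    have "ew e {..<Suc r} \<alpha> = ew e {..<r} \<alpha> * e (\<alpha> r)" by (simp add: ew_def)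
    moreover have "ew e {..<r} (res {..<r} \<alpha>) = ew e {..<r} \<alpha>" by (rule ew_cong) (simp add: res_def)
    ultimately show "ew e {..<Suc r} \<alpha> = ew e {..<r} (res {..<r} \<alpha>) * (\<lambda>\<gamma>. e (\<gamma> r)) (res ({..<Suc r} - {..<r}) \<alpha>)"
      by (simp add: res_def d)
  qed
  also have "\<dots> = (\<Sum>i\<le>a. Gs e {..<r} i * (\<Sum>\<gamma>\<in>comps ({..<Suc r} - {..<r}) (a - i). e (\<gamma> r)))"
    unfolding Gs_def by (rule comps_split[OF fin sub])
  also have "\<dots> = (\<Sum>i\<le>a. (Abs_fps e ^ r) $ i * Abs_fps e $ (a - i))"
    by (intro sum.cong refl) (simp add: d comps_single Suc.IH)
  also have "\<dots> = (Abs_fps e ^ Suc r) $ a"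
    unfolding power_Suc2 fps_mult_nth atLeast0AtMost by simp
  finally show ?case .
qed

lemma subsets_by_card:
  fixes \<phi> :: "nat \<Rightarrow> real"
  assumes fin: "finite I"
  shows "(\<Sum>B | B \<subseteq> I \<and> B \<noteq> {}. \<phi> (card B)) = (\<Sum>r\<in>{1..card I}. of_nat (card I choose r) * \<phi> r)"
proof -
  let ?S = "{B. B \<subseteq> I \<and> B \<noteq> {}}"
  have fS: "finite ?S" by (rule finite_subset[of _ "Pow I"]) (use fin in auto)
  have img: "card ` ?S \<subseteq> {1..card I}"
  proof
    fix r assume "r \<in> card ` ?S"
    then obtain B where B: "B \<subseteq> I" "B \<noteq> {}" "r = card B" by blast
    have "finite B" using B fin finite_subset by blast
    then show "r \<in> {1..card I}" using B card_mono[OF fin B(1)] by (simp add: Suc_le_eq card_gt_0_iff)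
  qed
  have "(\<Sum>B\<in>?S. \<phi> (card B)) = (\<Sum>r\<in>{1..card I}. \<Sum>B\<in>{B \<in> ?S. card B = r}. \<phi> (card B))"
    by (rule sum.group[OF fS _ img, symmetric]) simp
  also have "\<dots> = (\<Sum>r\<in>{1..card I}. of_nat (card I choose r) * \<phi> r)"
  proof (intro sum.cong refl)
    fix r assume r: "r \<in> {1..card I}"
    have "{B \<in> ?S. card B = r} = {B. B \<subseteq> I \<and> card B = r}" using r by auto
    then have "(\<Sum>B\<in>{B \<in> ?S. card B = r}. \<phi> (card B)) = (\<Sum>B\<in>{B. B \<subseteq> I \<and> card B = r}. \<phi> r)" by simp
    also have "\<dots> = of_nat (card I choose r) * \<phi> r" using n_subsets[OF fin, of r] by simp
    finally show "(\<Sum>B\<in>{B \<in> ?S. card B = r}. \<phi> (card B)) = of_nat (card I choose r) * \<phi> r" .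
  qed
  finally show ?thesis by simp
qed

lemma Zl_rec:
  "of_nat m * Zs w e {..<l} m = (\<Sum>r\<in>{1..l}. of_nat (l choose r) * (\<Sum>a\<le>m. of_nat a * w a r * Gs e {..<r} a * Zs w e {..<l - r} (m - a)))"
proof -
  have "of_nat m * Zs w e {..<l} m = (\<Sum>B | B \<subseteq> {..<l} \<and> B \<noteq> {}. \<Sum>a\<le>m. (of_nat a * w a (card B) * Gs e B a) * Zs w e ({..<l} - B) (m - a))"
    by (rule Zs_rec) simp
  also have "\<dots> = (\<Sum>B | B \<subseteq> {..<l} \<and> B \<noteq> {}. (\<lambda>r. \<Sum>a\<le>m. of_nat a * w a r * Gs e {..<r} a * Zs w e {..<l - r} (m - a)) (card B))"
  proof (rule sum.cong[OF refl])
    fix B assume B: "B \<in> {B. B \<subseteq> {..<l} \<and> B \<noteq> {}}"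
    then have fB: "finite B" using finite_subset by blast
    have "card ({..<l} - B) = l - card B" using B fB by (simp add: card_Diff_subset)
    then show "(\<Sum>a\<le>m. (of_nat a * w a (card B) * Gs e B a) * Zs w e ({..<l} - B) (m - a)) = (\<lambda>r. \<Sum>a\<le>m. of_nat a * w a r * Gs e {..<r} a * Zs w e {..<l - r} (m - a)) (card B)"
      using Gs_card[OF fB] Zs_card[of "{..<l} - B"] by simp
  qed
  also have "\<dots> = (\<Sum>r\<in>{1..l}. of_nat (l choose r) * (\<Sum>a\<le>m. of_nat a * w a r * Gs e {..<r} a * Zs w e {..<l - r} (m - a)))"
    using subsets_by_card[of "{..<l}"] by simp
  finally show ?thesis .
qed

definition Zt :: "(nat \<Rightarrow> nat \<Rightarrow> real) \<Rightarrow> (nat \<Rightarrow> real) \<Rightarrow> nat \<Rightarrow> real" where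
  "Zt w e m = (\<Sum>l\<le>m. Zs w e {..<l} m / fact l)"

lemma triangle_sum:
  fixes \<Phi> :: "nat \<Rightarrow> nat \<Rightarrow> real"
  assumes van: "\<And>r l'. m < r + l' \<Longrightarrow> \<Phi> r l' = 0"
  shows "(\<Sum>l\<le>m. \<Sum>r\<in>{1..l}. \<Phi> r (l - r)) = (\<Sum>r\<in>{1..m}. \<Sum>l'\<le>m. \<Phi> r l')"
proof -
  have "(\<Sum>l\<le>m. \<Sum>r\<in>{1..l}. \<Phi> r (l - r)) = (\<Sum>l\<le>m. \<Sum>r\<in>{1..m}. if r \<le> l then \<Phi> r (l - r) else 0)"
  proof (rule sum.cong[OF refl])
    fix l assume "l \<in> {..m}"
    then have "{1..l} \<subseteq> {1..m}" by auto
    then show "(\<Sum>r\<in>{1..l}. \<Phi> r (l - r)) = (\<Sum>r\<in>{1..m}. if r \<le> l then \<Phi> r (l - r) else 0)"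
      by (subst sum.mono_neutral_cong_left[of "{1..m}" "{1..l}"]) auto
  qed
  also have "\<dots> = (\<Sum>r\<in>{1..m}. \<Sum>l\<le>m. if r \<le> l then \<Phi> r (l - r) else 0)" by (rule sum.swap)
  also have "\<dots> = (\<Sum>r\<in>{1..m}. \<Sum>l'\<le>m. \<Phi> r l')"
  proof (rule sum.cong[OF refl])
    fix r assume r: "r \<in> {1..m}"
    have "(\<Sum>l\<le>m. if r \<le> l then \<Phi> r (l - r) else 0) = (\<Sum>l\<in>{r..m}. \<Phi> r (l - r))"
      by (subst sum.mono_neutral_cong_right[of "{..m}" "{r..m}"]) auto
    also have "\<dots> = (\<Sum>l'\<in>{0..m - r}. \<Phi> r l')"
    proof -
      have "(\<Sum>l\<in>{0 + r..m - r + r}. \<Phi> r (l - r)) = (\<Sum>l'\<in>{0..m - r}. \<Phi> r (l' + r - r))"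
        by (rule sum.shift_bounds_cl_nat_ivl)
      then show ?thesis using r by simp
    qed
    also have "\<dots> = (\<Sum>l'\<le>m. \<Phi> r l')"
      by (subst sum.mono_neutral_cong_left[of "{..m}" "{0..m - r}"]) (auto intro!: van)
    finally show "(\<Sum>l\<le>m. if r \<le> l then \<Phi> r (l - r) else 0) = (\<Sum>l'\<le>m. \<Phi> r l')" .
  qed
  finally show ?thesis .
qed

lemma Zt_rec:
  assumes e0: "e 0 = 0"
  shows "of_nat m * Zt w e m = (\<Sum>a\<in>{1..m}. (\<Sum>r\<in>{1..a}. of_nat a * w a r * Gs e {..<r} a / fact r) * Zt w e (m - a))"
proof -
  define T where "T r l' a = (of_nat a * w a r * Gs e {..<r} a / fact r) * (Zs w e {..<l'} (m - a) / fact l')" for r l' a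
  define \<Phi> where "\<Phi> r l' = (\<Sum>a\<le>m. T r l' a)" for r l'
  have Tv1: "T r l' a = 0" if "a < r" for r l' a unfolding T_def using Gs_vanish[of e a r, OF e0 that] by simp
  have Tv2: "T r l' a = 0" if "m - a < l'" for r l' a unfolding T_def using Zs_vanish[of e "m - a" "l'" w, OF e0 that] by simp
  have Tv0: "T r l' 0 = 0" for r l' unfolding T_def by simp
  have van: "\<Phi> r l' = 0" if "m < r + l'" for r l'
    unfolding \<Phi>_def
  proof (intro sum.neutral ballI)
    fix a assume am: "a \<in> {..m}"
    show "T r l' a = 0"
    proof (cases "a < r")
      case True then show ?thesis by (rule Tv1)
    next
      case False then have "m - a < l'" using that am by auto
      then show ?thesis by (rule Tv2)
    qed
  qed
  have "of_nat m * Zt w e m = (\<Sum>l\<le>m. \<Sum>r\<in>{1..l}. \<Phi> r (l - r))"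
    unfolding Zt_def sum_distrib_left
  proof (rule sum.cong[OF refl])
    fix l assume "l \<in> {..m}"
    have "of_nat m * (Zs w e {..<l} m / fact l) = (of_nat m * Zs w e {..<l} m) / fact l" by simp
    also have "\<dots> = (\<Sum>r\<in>{1..l}. of_nat (l choose r) / fact l * (\<Sum>a\<le>m. of_nat a * w a r * Gs e {..<r} a * Zs w e {..<l - r} (m - a)))"
      by (simp only: Zl_rec sum_divide_distrib) (simp add: divide_simps)
    also have "\<dots> = (\<Sum>r\<in>{1..l}. \<Phi> r (l - r))"
    proof (rule sum.cong[OF refl])
      fix r assume r: "r \<in> {1..l}"
      have c: "of_nat (l choose r) / fact l = (1::real) / (fact r * fact (l - r))"
        using r binomial_fact[of r l] by (simp add: divide_simps)
      show "of_nat (l choose r) / fact l * (\<Sum>a\<le>m. of_nat a * w a r * Gs e {..<r} a * Zs w e {..<l - r} (m - a)) = \<Phi> r (l - r)"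
        unfolding \<Phi>_def T_def c sum_distrib_left by (rule sum.cong[OF refl]) simp
    qed
    finally show "of_nat m * (Zs w e {..<l} m / fact l) = (\<Sum>r\<in>{1..l}. \<Phi> r (l - r))" .
  qed
  also have "\<dots> = (\<Sum>r\<in>{1..m}. \<Sum>l'\<le>m. \<Phi> r l')" by (rule triangle_sum) (rule van)
  also have "\<dots> = (\<Sum>a\<le>m. \<Sum>r\<in>{1..m}. \<Sum>l'\<le>m. T r l' a)"
  proof -
    have "(\<Sum>r\<in>{1..m}. \<Sum>l'\<le>m. \<Sum>a\<le>m. T r l' a) = (\<Sum>r\<in>{1..m}. \<Sum>a\<le>m. \<Sum>l'\<le>m. T r l' a)"
      by (rule sum.cong[OF refl]) (rule sum.swap)
    also have "\<dots> = (\<Sum>a\<le>m. \<Sum>r\<in>{1..m}. \<Sum>l'\<le>m. T r l' a)" by (rule sum.swap)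
    finally show ?thesis unfolding \<Phi>_def .
  qed
  also have "\<dots> = (\<Sum>a\<in>{1..m}. \<Sum>r\<in>{1..a}. \<Sum>l'\<le>m - a. T r l' a)"
  proof -
    have "(\<Sum>a\<le>m. \<Sum>r\<in>{1..m}. \<Sum>l'\<le>m. T r l' a) = (\<Sum>a\<in>{1..m}. \<Sum>r\<in>{1..m}. \<Sum>l'\<le>m. T r l' a)"
      by (rule sum.mono_neutral_cong_right) (auto simp: Tv0 Suc_le_eq)
    also have "\<dots> = (\<Sum>a\<in>{1..m}. \<Sum>r\<in>{1..a}. \<Sum>l'\<le>m - a. T r l' a)"
    proof (rule sum.cong[OF refl])
      fix a assume a: "a \<in> {1..m}"
      have "(\<Sum>r\<in>{1..m}. \<Sum>l'\<le>m. T r l' a) = (\<Sum>r\<in>{1..a}. \<Sum>l'\<le>m. T r l' a)"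
        using a by (intro sum.mono_neutral_cong_right) (auto simp: Tv1)
      also have "\<dots> = (\<Sum>r\<in>{1..a}. \<Sum>l'\<le>m - a. T r l' a)"
        by (intro sum.cong refl sum.mono_neutral_cong_right) (auto simp: Tv2)
      finally show "(\<Sum>r\<in>{1..m}. \<Sum>l'\<le>m. T r l' a) = (\<Sum>r\<in>{1..a}. \<Sum>l'\<le>m - a. T r l' a)" .
    qed
    finally show ?thesis .
  qed
  also have "\<dots> = (\<Sum>a\<in>{1..m}. (\<Sum>r\<in>{1..a}. of_nat a * w a r * Gs e {..<r} a / fact r) * Zt w e (m - a))"
    unfolding Zt_def T_def sum_product by (rule refl)
  finally show ?thesis .
qed

lemma Zt_0: "Zt w e 0 = 1"
proof -
  have c: "comps {} 0 = {\<lambda>i. 0}" unfolding comps_def by auto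
  have p: "{P. partition_on {} P} = {{}}" by (auto simp: partition_on_empty)
  show ?thesis unfolding Zt_def Zs_def PS_def ew_def by (simp add: c p)
qed

abbreviation Lf :: "real fps" where "Lf \<equiv> fps_ln 1"

lemma logcomp_deriv:
  assumes "A $ 0 = (0::real)"
  shows "fps_deriv (Lf oo A) = fps_deriv A * inverse (1 + A)"
proof -
  have "fps_deriv (Lf oo A) = (fps_deriv Lf oo A) * fps_deriv A"
    by (rule fps_compose_deriv[OF assms])
  also have "fps_deriv Lf = inverse (1 + fps_X)" by (simp add: fps_ln_deriv)
  also have "inverse (1 + fps_X) oo A = inverse ((1 + fps_X) oo A)"
    by (rule fps_inverse_compose[OF assms]) simp
  also have "(1 + fps_X) oo A = 1 + A"
    using assms by (simp add: fps_compose_add_distrib)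
  finally show ?thesis by (simp add: mult.commute)
qed

lemma prod_ode:
  fixes A :: "nat \<Rightarrow> real fps"
  assumes "\<And>i. i < n \<Longrightarrow> A i $ 0 = 0"
  shows "fps_deriv (\<Prod>i<n. 1 + A i) = fps_deriv (\<Sum>i<n. Lf oo A i) * (\<Prod>i<n. 1 + A i)"
  using assms
proof (induction n)
  case 0
  then show ?case by simp
next
  case (Suc n)
  let ?Y = "\<Prod>i<n. 1 + A i"
  let ?H = "\<Sum>i<n. Lf oo A i"
  have IH: "fps_deriv ?Y = fps_deriv ?H * ?Y" using Suc by simp
  have A0: "A n $ 0 = 0" using Suc by simp
  have inv: "inverse (1 + A n) * (1 + A n) = 1" by (rule inverse_mult_eq_1) (simp add: A0)
  have "fps_deriv (\<Prod>i<Suc n. 1 + A i) = fps_deriv (?Y * (1 + A n))" by simp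
  also have "\<dots> = fps_deriv ?Y * (1 + A n) + ?Y * fps_deriv (A n)" by (simp add: fps_deriv_mult)
  also have "\<dots> = fps_deriv ?H * ?Y * (1 + A n) + fps_deriv (A n) * (inverse (1 + A n) * (1 + A n)) * ?Y"
    unfolding IH inv by (simp add: mult.commute)
  also have "\<dots> = (fps_deriv ?H + fps_deriv (Lf oo A n)) * (?Y * (1 + A n))"
    by (simp add: logcomp_deriv[OF A0] algebra_simps)
  also have "\<dots> = fps_deriv (\<Sum>i<Suc n. Lf oo A i) * (\<Prod>i<Suc n. 1 + A i)" by simp
  finally show ?case .
qed

lemma prod_one_nth0:
  fixes A :: "nat \<Rightarrow> real fps"
  assumes "\<And>i. i < n \<Longrightarrow> A i $ 0 = 0"
  shows "(\<Prod>i<n. 1 + A i) $ 0 = 1"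
  using assms by (induction n) (auto simp: fps_mult_nth)

lemma ode_rec:
  fixes Y H :: "real fps"
  assumes "fps_deriv Y = fps_deriv H * Y"
  shows "of_nat (Suc m) * Y $ Suc m = (\<Sum>a\<in>{1..Suc m}. (of_nat a * H $ a) * Y $ (Suc m - a))"
proof -
  have "of_nat (Suc m) * Y $ Suc m = (fps_deriv Y) $ m" by (simp add: fps_deriv_nth)
  also have "\<dots> = (\<Sum>i=0..m. (of_nat (Suc i) * H $ Suc i) * Y $ (m - i))"
    unfolding assms fps_mult_nth by (simp add: fps_deriv_nth)
  also have "\<dots> = (\<Sum>a\<in>{1..Suc m}. (of_nat a * H $ a) * Y $ (Suc m - a))"
  proof -
    have "(\<Sum>a\<in>{0 + 1..m + 1}. (of_nat a * H $ a) * Y $ (Suc m - a)) = (\<Sum>i\<in>{0..m}. (of_nat (i + 1) * H $ (i + 1)) * Y $ (Suc m - (i + 1)))"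
      by (rule sum.shift_bounds_cl_nat_ivl)
    then show ?thesis by simp
  qed
  finally show ?thesis .
qed

lemma stirling_pow:
  "((fps_exp c - 1) ^ r) $ a = c ^ a * fact r * real (Stirling a r) / fact a"
proof (induction a arbitrary: r)
  case 0
  have "((fps_exp c - 1) ^ r) $ 0 = ((fps_exp c - 1) $ 0) ^ r" by (rule fps_nth_power_0)
  then show ?case by (cases r) auto
next
  case (Suc a)
  let ?g = "fps_exp c - 1 :: real fps"
  show ?case
  proof (cases r)
    case 0
    then show ?thesis by simp
  next
    case (Suc r')
    have dg: "fps_deriv ?g = fps_const c * (?g + 1)" by simp
    have "fps_deriv (?g ^ r) = fps_const (of_nat r) * fps_deriv ?g * ?g ^ r'"
      unfolding Suc fps_deriv_power diff_Suc_1 ..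
    also have "\<dots> = fps_const (of_nat r * c) * (?g ^ r + ?g ^ r')"
      unfolding dg using Suc by (simp add: algebra_simps fps_const_mult[symmetric] del: fps_const_mult)
    finally have d: "fps_deriv (?g ^ r) = fps_const (of_nat r * c) * (?g ^ r + ?g ^ r')" .
    have "of_nat (Suc a) * (?g ^ r) $ Suc a = (fps_deriv (?g ^ r)) $ a" by (simp add: fps_deriv_nth)
    also have "\<dots> = of_nat r * c * ((?g ^ r) $ a + (?g ^ r') $ a)" unfolding d by simp
    also have "\<dots> = of_nat r * c * (c ^ a * fact r * real (Stirling a r) / fact a + c ^ a * fact r' * real (Stirling a r') / fact a)"
      using Suc.IH by simp
    finally have e: "of_nat (Suc a) * (?g ^ r) $ Suc a = of_nat r * c * (c ^ a * fact r * real (Stirling a r) / fact a + c ^ a * fact r' * real (Stirling a r') / fact a)" .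
    have St: "real (Stirling (Suc a) r) = of_nat r * real (Stirling a r) + real (Stirling a r')"
      using Suc by (simp add: algebra_simps)
    have fr: "(fact r :: real) = of_nat r * fact r'" using Suc by simp
    have "(?g ^ r) $ Suc a = of_nat r * c * (c ^ a * fact r * real (Stirling a r) / fact a + c ^ a * fact r' * real (Stirling a r') / fact a) / of_nat (Suc a)"
      using e by (simp add: eq_divide_eq mult.commute del: of_nat_Suc)
    also have "\<dots> = c ^ Suc a * fact r * real (Stirling (Suc a) r) / fact (Suc a)"
      unfolding St fr by (simp add: field_simps)
    finally show ?thesis .
  qed
qed

definition kappa :: "nat \<Rightarrow> real \<Rightarrow> real" where
  "kappa a t = (\<Sum>r\<in>{1..a}. (-1) ^ (r - 1) * fact (r - 1) * t ^ r * real (Stirling a r) / fact a)"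

lemma Lf_nth: "Lf $ i = (if i = 0 then 0 else (-1) ^ (i - 1) / of_nat i)"
  by (simp add: fps_ln_nth)

lemma sum_drop0:
  fixes f :: "nat \<Rightarrow> real"
  assumes "f 0 = 0"
  shows "(\<Sum>i=0..a. f i) = (\<Sum>i\<in>{1..a}. f i)"
  using assms by (simp add: sum.atLeast_Suc_atMost)

lemma H_coeff: "(Lf oo (fps_const t * (fps_exp c - 1))) $ a = c ^ a * kappa a t"
proof -
  have "(Lf oo (fps_const t * (fps_exp c - 1))) $ a = (\<Sum>i=0..a. Lf $ i * ((fps_const t * (fps_exp c - 1)) ^ i) $ a)"
    by (rule fps_compose_nth)
  also have "\<dots> = (\<Sum>i\<in>{1..a}. Lf $ i * ((fps_const t * (fps_exp c - 1)) ^ i) $ a)"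
    by (rule sum_drop0) (simp add: Lf_nth)
  also have "\<dots> = (\<Sum>i\<in>{1..a}. c ^ a * ((-1) ^ (i - 1) * fact (i - 1) * t ^ i * real (Stirling a i) / fact a))"
  proof (rule sum.cong[OF refl])
    fix i assume i: "i \<in> {1..a}"
    have p: "(fps_const t * (fps_exp c - 1)) ^ i = fps_const (t ^ i) * (fps_exp c - 1) ^ i"
      by (simp add: power_mult_distrib fps_const_power)
    have fi: "(fact i :: real) = of_nat i * fact (i - 1)" using i by (metis fact_num_eq_if of_nat_eq_0_iff atLeastAtMost_iff not_one_le_zero)
    show "Lf $ i * ((fps_const t * (fps_exp c - 1)) ^ i) $ a = c ^ a * ((-1) ^ (i - 1) * fact (i - 1) * t ^ i * real (Stirling a i) / fact a)"
      unfolding p using i by (simp add: Lf_nth stirling_pow fi field_simps)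
  qed
  also have "\<dots> = c ^ a * kappa a t" unfolding kappa_def by (simp add: sum_distrib_left)
  finally show ?thesis .
qed

definition Efps :: "nat \<Rightarrow> (nat \<Rightarrow> real) \<Rightarrow> real fps" where
  "Efps n x = (\<Prod>i<n. 1 + fps_const (x i) * fps_X)"

lemma Efps_nth: "Efps n x $ j = esym n j x"
proof (induction n arbitrary: j)
  case 0
  then show ?case by (cases j) (simp_all add: Efps_def esym_gt)
next
  case (Suc n)
  have "Efps (Suc n) x = Efps n x + fps_const (x n) * (Efps n x * fps_X)"
    by (simp add: Efps_def algebra_simps)
  then have "Efps (Suc n) x $ j = Efps n x $ j + x n * (if j = 0 then 0 else Efps n x $ (j - 1))"
    by (simp add: fps_X_mult_right_nth)
  then show ?case using Suc by (cases j) (simp_all add: esym_Suc)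
qed

lemma Efps_0: "Efps n x $ 0 = 1" by (simp add: Efps_nth)

lemma log_Efps: "Lf oo (Efps n x - 1) = (\<Sum>i<n. Lf oo (fps_const (x i) * fps_X))"
proof -
  let ?E = "Efps n x"
  let ?R = "\<Sum>i<n. Lf oo (fps_const (x i) * fps_X)"
  have A0: "\<And>i. i < n \<Longrightarrow> (fps_const (x i) * fps_X) $ 0 = 0" by simp
  have E0: "(?E - 1) $ 0 = 0" by (simp add: Efps_0)
  have dE: "fps_deriv ?E = fps_deriv ?R * ?E" unfolding Efps_def by (rule prod_ode) simp
  have inv: "?E * inverse ?E = 1" using inverse_mult_eq_1[of ?E] by (simp add: Efps_0 mult.commute)
  have "fps_deriv (Lf oo (?E - 1)) = fps_deriv ?E * inverse ?E"
    using logcomp_deriv[OF E0] by simp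
  also have "\<dots> = fps_deriv ?R" unfolding dE using inv by (simp add: mult.assoc)
  finally have d: "fps_deriv (Lf oo (?E - 1)) = fps_deriv ?R" .
  have "(Lf oo (?E - 1)) $ 0 = 0" by simp
  moreover have "?R $ 0 = 0" by (simp add: fps_sum_nth)
  ultimately show ?thesis using d by (simp add: fps_deriv_eq_iff)
qed

lemma power_sum_formula:
  assumes a: "a \<ge> 1"
  shows "(\<Sum>i<n. x i ^ a) = of_nat a * (-1) ^ (a - 1) * (\<Sum>r\<in>{1..a}. (-1) ^ (r - 1) / of_nat r * ((Efps n x - 1) ^ r) $ a)"
proof -
  have "(Lf oo (Efps n x - 1)) $ a = (\<Sum>r=0..a. Lf $ r * ((Efps n x - 1) ^ r) $ a)" by (rule fps_compose_nth)
  also have "\<dots> = (\<Sum>r\<in>{1..a}. (-1) ^ (r - 1) / of_nat r * ((Efps n x - 1) ^ r) $ a)"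
    by (subst sum_drop0) (simp_all add: Lf_nth)
  finally have l: "(Lf oo (Efps n x - 1)) $ a = (\<Sum>r\<in>{1..a}. (-1) ^ (r - 1) / of_nat r * ((Efps n x - 1) ^ r) $ a)" .
  have "(\<Sum>i<n. Lf oo (fps_const (x i) * fps_X)) $ a = (\<Sum>i<n. x i ^ a) * ((-1) ^ (a - 1) / of_nat a)"
    using a by (simp add: fps_sum_nth fps_compose_linear Lf_nth sum_distrib_right sum_divide_distrib)
  then have h: "(\<Sum>i<n. x i ^ a) * ((-1) ^ (a - 1) / of_nat a) = (\<Sum>r\<in>{1..a}. (-1) ^ (r - 1) / of_nat r * ((Efps n x - 1) ^ r) $ a)"
    using l log_Efps by simp
  define S where "S = (\<Sum>r\<in>{1..a}. (-1) ^ (r - 1) / of_nat r * ((Efps n x - 1) ^ r) $ a)"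
  define P where "P = (\<Sum>i<n. x i ^ a)"
  define s :: real where "s = (-1) ^ (a - 1)"
  have sq: "s * s = 1" unfolding s_def by (simp add: power_mult_distrib[symmetric])
  have "s * P = of_nat a * S" using h a unfolding S_def P_def s_def by (simp add: field_simps)
  then have "s * (s * P) = s * (of_nat a * S)" by simp
  then have "P = s * (of_nat a * S)" using sq by (simp add: mult.assoc[symmetric])
  then show ?thesis unfolding S_def P_def s_def by (simp add: mult_ac)
qed

definition ee :: "nat \<Rightarrow> (nat \<Rightarrow> real) \<Rightarrow> nat \<Rightarrow> real" where
  "ee n x j = (if j = 0 then 0 else esym n j x)"

definition wt :: "real \<Rightarrow> nat \<Rightarrow> nat \<Rightarrow> real" where
  "wt t a r = (-1) ^ (a + r) * fact (r - 1) * (of_nat a * kappa a t)"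

definition Yfps :: "nat \<Rightarrow> (nat \<Rightarrow> real) \<Rightarrow> real \<Rightarrow> real fps" where
  "Yfps n x t = (\<Prod>i<n. 1 + fps_const t * (fps_exp (x i) - 1))"

definition Hfps :: "nat \<Rightarrow> (nat \<Rightarrow> real) \<Rightarrow> real \<Rightarrow> real fps" where
  "Hfps n x t = (\<Sum>i<n. Lf oo (fps_const t * (fps_exp (x i) - 1)))"

lemma Abs_ee: "Abs_fps (ee n x) = Efps n x - 1"
  by (rule fps_ext) (simp add: ee_def Efps_nth)

lemma H_rel:
  assumes a: "a \<ge> 1"
  shows "of_nat a * Hfps n x t $ a = (\<Sum>r\<in>{1..a}. of_nat a * wt t a r * Gs (ee n x) {..<r} a / fact r)"
proof -
  have "Hfps n x t $ a = (\<Sum>i<n. x i ^ a) * kappa a t"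
    unfolding Hfps_def by (simp add: fps_sum_nth H_coeff sum_distrib_right)
  also have "\<dots> = of_nat a * (-1) ^ (a - 1) * (\<Sum>r\<in>{1..a}. (-1) ^ (r - 1) / of_nat r * ((Efps n x - 1) ^ r) $ a) * kappa a t"
    using power_sum_formula[OF a] by simp
  finally have h: "Hfps n x t $ a = of_nat a * (-1) ^ (a - 1) * (\<Sum>r\<in>{1..a}. (-1) ^ (r - 1) / of_nat r * ((Efps n x - 1) ^ r) $ a) * kappa a t" .
  have "of_nat a * Hfps n x t $ a = (\<Sum>r\<in>{1..a}. of_nat a * (of_nat a * kappa a t) * ((-1) ^ (a - 1) * (-1) ^ (r - 1) / of_nat r) * ((Efps n x - 1) ^ r) $ a)"
  proof -
    have "of_nat a * Hfps n x t $ a = (of_nat a * (of_nat a * kappa a t) * (-1) ^ (a - 1)) * (\<Sum>r\<in>{1..a}. (-1) ^ (r - 1) / of_nat r * ((Efps n x - 1) ^ r) $ a)"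
      unfolding h by (simp only: mult_ac)
    also have "\<dots> = (\<Sum>r\<in>{1..a}. of_nat a * (of_nat a * kappa a t) * ((-1) ^ (a - 1) * (-1) ^ (r - 1) / of_nat r) * ((Efps n x - 1) ^ r) $ a)"
      unfolding sum_distrib_left by (rule sum.cong[OF refl]) (simp add: mult_ac)
    finally show ?thesis .
  qed
  also have "\<dots> = (\<Sum>r\<in>{1..a}. of_nat a * wt t a r * Gs (ee n x) {..<r} a / fact r)"
  proof (rule sum.cong[OF refl])
    fix r assume r: "r \<in> {1..a}"
    have sgn: "((-1) ^ (a - 1) * (-1) ^ (r - 1) :: real) = (-1) ^ (a + r)"
      using a r by (cases a; cases r) (simp_all add: power_add)
    have fr: "(fact r :: real) = of_nat r * fact (r - 1)" using r by (metis fact_num_eq_if of_nat_eq_0_iff atLeastAtMost_iff not_one_le_zero)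
    have G: "Gs (ee n x) {..<r} a = ((Efps n x - 1) ^ r) $ a" by (simp add: Gs_power Abs_ee)
    show "of_nat a * (of_nat a * kappa a t) * ((-1) ^ (a - 1) * (-1) ^ (r - 1) / of_nat r) * ((Efps n x - 1) ^ r) $ a
        = of_nat a * wt t a r * Gs (ee n x) {..<r} a / fact r"
      unfolding sgn G wt_def fr using r by (simp add: field_simps)
  qed
  finally show ?thesis .
qed

lemma Y_eq_Zt: "Yfps n x t $ m = Zt (wt t) (ee n x) m"
proof (induction m rule: less_induct)
  case (less m)
  show ?case
  proof (cases m)
    case 0
    have "Yfps n x t $ 0 = 1" unfolding Yfps_def by (rule prod_one_nth0) simp
    then show ?thesis using 0 by (simp add: Zt_0)
  next
    case (Suc m')
    have A0: "\<And>i. i < n \<Longrightarrow> (fps_const t * (fps_exp (x i) - 1)) $ 0 = 0" by simp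
    have ode: "fps_deriv (Yfps n x t) = fps_deriv (Hfps n x t) * Yfps n x t"
      unfolding Yfps_def Hfps_def by (rule prod_ode[OF A0])
    have e0: "ee n x 0 = 0" by (simp add: ee_def)
    have "of_nat m * Yfps n x t $ m = (\<Sum>a\<in>{1..m}. (of_nat a * Hfps n x t $ a) * Yfps n x t $ (m - a))"
      unfolding Suc by (rule ode_rec[OF ode])
    also have "\<dots> = (\<Sum>a\<in>{1..m}. (\<Sum>r\<in>{1..a}. of_nat a * wt t a r * Gs (ee n x) {..<r} a / fact r) * Zt (wt t) (ee n x) (m - a))"
    proof (rule sum.cong[OF refl])
      fix a assume a: "a \<in> {1..m}"
      then have "m - a < m" by auto
      then show "(of_nat a * Hfps n x t $ a) * Yfps n x t $ (m - a) = (\<Sum>r\<in>{1..a}. of_nat a * wt t a r * Gs (ee n x) {..<r} a / fact r) * Zt (wt t) (ee n x) (m - a)"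
        using less H_rel[of a] a by simp
    qed
    also have "\<dots> = of_nat m * Zt (wt t) (ee n x) m" by (rule Zt_rec[of "ee n x" m "wt t", OF e0, symmetric])
    finally show ?thesis using Suc by simp
  qed
qed

definition Lall :: "nat \<Rightarrow> nat \<Rightarrow> nat list set" where
  "Lall l m = {xs. length xs = l \<and> sum_list xs = m}"

definition Lp :: "nat \<Rightarrow> nat \<Rightarrow> nat list set" where
  "Lp l m = {xs. length xs = l \<and> sum_list xs = m \<and> 0 \<notin> set xs}"

definition Fl :: "(nat \<Rightarrow> nat \<Rightarrow> real) \<Rightarrow> (nat \<Rightarrow> real) \<Rightarrow> nat list \<Rightarrow> real" where
  "Fl w e xs = PS w {..<length xs} (\<lambda>i. xs ! i) * ew e {..<length xs} (\<lambda>i. xs ! i)"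

lemma finite_Lall: "finite (Lall l m)"
proof (rule finite_subset[of _ "{xs. set xs \<subseteq> {..m} \<and> length xs \<le> l}"])
  show "Lall l m \<subseteq> {xs. set xs \<subseteq> {..m} \<and> length xs \<le> l}"
    unfolding Lall_def using member_le_sum_list by fastforce
  show "finite {xs. set xs \<subseteq> {..m} \<and> length xs \<le> l}" by (rule finite_lists_length_le) simp
qed

lemma Lp_sub: "Lp l m \<subseteq> Lall l m" unfolding Lp_def Lall_def by auto

lemma Zs_lists:
  assumes e0: "e 0 = 0"
  shows "Zs w e {..<l} m = (\<Sum>xs\<in>Lp l m. Fl w e xs)"
proof -
  have "Zs w e {..<l} m = (\<Sum>xs\<in>Lall l m. Fl w e xs)"
    unfolding Zs_def
  proof (rule sum.reindex_bij_witness[of _ "\<lambda>xs i. if i < l then xs ! i else 0" "\<lambda>\<alpha>. map \<alpha> [0..<l]"])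
    fix \<alpha> assume a: "\<alpha> \<in> comps {..<l} m"
    then have z: "\<And>i. i \<ge> l \<Longrightarrow> \<alpha> i = 0" and s: "(\<Sum>i<l. \<alpha> i) = m" by (auto simp: comps_def)
    show "(\<lambda>i. if i < l then map \<alpha> [0..<l] ! i else 0) = \<alpha>" using z by (auto simp: not_less)
    show "map \<alpha> [0..<l] \<in> Lall l m" using s by (simp add: Lall_def sum_list_sum_nth atLeast0LessThan)
    have "PS w {..<l} \<alpha> = PS w {..<l} (\<lambda>i. map \<alpha> [0..<l] ! i)" by (rule PS_cong) simp
    moreover have "ew e {..<l} \<alpha> = ew e {..<l} (\<lambda>i. map \<alpha> [0..<l] ! i)" by (rule ew_cong) simp
    ultimately show "Fl w e (map \<alpha> [0..<l]) = PS w {..<l} \<alpha> * ew e {..<l} \<alpha>" by (simp add: Fl_def)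
  next
    fix xs assume "xs \<in> Lall l m"
    then have l: "length xs = l" and s: "sum_list xs = m" by (auto simp: Lall_def)
    show "map (\<lambda>i. if i < l then xs ! i else 0) [0..<l] = xs" using l by (simp add: list_eq_iff_nth_eq)
    have "(\<Sum>i<l. if i < l then xs ! i else 0) = m" using s l by (simp add: sum_list_sum_nth atLeast0LessThan)
    then show "(\<lambda>i. if i < l then xs ! i else 0) \<in> comps {..<l} m" by (simp add: comps_def)
  qed
  also have "\<dots> = (\<Sum>xs\<in>Lp l m. Fl w e xs)"
  proof (rule sum.mono_neutral_right[OF finite_Lall Lp_sub, symmetric, THEN sym])
    show "\<forall>xs\<in>Lall l m - Lp l m. Fl w e xs = 0"
    proof
      fix xs assume "xs \<in> Lall l m - Lp l m"
      then have "0 \<in> set xs" by (auto simp: Lall_def Lp_def)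
      then obtain i where i: "i < length xs" "xs ! i = 0" by (metis in_set_conv_nth)
      then have "ew e {..<length xs} (\<lambda>i. xs ! i) = 0" unfolding ew_def using e0
        by (intro prod_zero) (use i in \<open>auto intro!: bexI[of _ i]\<close>)
      then show "Fl w e xs = 0" by (simp add: Fl_def)
    qed
  qed
  finally show ?thesis .
qed

lemma Fl_perm:
  assumes "mset xs = mset ys"
  shows "Fl w e xs = Fl w e ys"
proof -
  obtain p where p: "p permutes {..<length ys}" "permute_list p ys = xs"
    using mset_eq_permutation[OF assms] by blast
  have len: "length xs = length ys" using p by auto
  have nth: "xs ! i = ys ! p i" if "i < length ys" for i
    using p that by (auto simp: permute_list_nth)
  have bij: "bij_betw p {..<length ys} {..<length ys}" using p(1) by (rule permutes_imp_bij)
  have "PS w {..<length ys} (\<lambda>i. ys ! i) = PS w {..<length ys} (\<lambda>j. ys ! p j)" by (rule PS_reindex[OF bij])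
  also have "\<dots> = PS w {..<length ys} (\<lambda>i. xs ! i)" by (rule PS_cong) (simp add: nth)
  finally have 1: "PS w {..<length ys} (\<lambda>i. ys ! i) = PS w {..<length ys} (\<lambda>i. xs ! i)" .
  have "ew e {..<length ys} (\<lambda>i. ys ! i) = (\<Prod>j<length ys. e (ys ! p j))"
    unfolding ew_def by (rule prod.reindex_bij_betw[OF bij, symmetric])
  also have "\<dots> = ew e {..<length ys} (\<lambda>i. xs ! i)" unfolding ew_def by (rule prod.cong) (simp_all add: nth)
  finally have 2: "ew e {..<length ys} (\<lambda>i. ys ! i) = ew e {..<length ys} (\<lambda>i. xs ! i)" .
  show ?thesis unfolding Fl_def len using 1 2 by simp
qed

lemma length_le_sum_list: "0 \<notin> set xs \<Longrightarrow> length xs \<le> sum_list (xs :: nat list)"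
  by (induction xs) auto


lemma partitions_sub: "partitions_of m \<subseteq> {xs. set xs \<subseteq> {..m} \<and> length xs \<le> m}"
  unfolding partitions_of_def is_partition_def using member_le_sum_list length_le_sum_list by fastforce

lemma finite_partitions_of: "finite (partitions_of m)"
  by (rule finite_subset[OF partitions_sub]) (rule finite_lists_length_le, simp)

lemma rev_sort_partition: "0 \<notin> set xs \<Longrightarrow> is_partition (rev (sort xs))"
  unfolding is_partition_def by (simp add: sorted_wrt_rev)

lemma mset_rev_sort: "mset (rev (sort xs)) = mset xs" by simp

lemma Lp_group:
  "(\<Sum>xs\<in>Lp l m. Fl w e xs) = (\<Sum>lam\<in>{lam\<in>partitions_of m. length lam = l}. of_nat (card (permutations_of_multiset (mset lam))) * Fl w e lam)"
proof -
  let ?T = "{lam\<in>partitions_of m. length lam = l}"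
  have fS: "finite (Lp l m)" by (rule finite_subset[OF Lp_sub finite_Lall])
  have fT: "finite ?T" by (rule finite_subset[OF _ finite_partitions_of]) auto
  have img: "(\<lambda>xs. rev (sort xs)) ` Lp l m \<subseteq> ?T"
  proof
    fix y assume "y \<in> (\<lambda>xs. rev (sort xs)) ` Lp l m"
    then obtain xs where xs: "xs \<in> Lp l m" "y = rev (sort xs)" by blast
    have "is_partition y" using xs rev_sort_partition by (simp add: Lp_def)
    moreover have "sum_list y = m"
    proof -
      have "sum_list y = sum_list xs" using xs(2) sum_mset_sum_list[of y] sum_mset_sum_list[of xs] by simp
      then show ?thesis using xs(1) by (simp add: Lp_def)
    qed
    moreover have "length y = l" using xs by (simp add: Lp_def)
    ultimately show "y \<in> ?T" by (simp add: partitions_of_def)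
  qed
  have "(\<Sum>xs\<in>Lp l m. Fl w e xs) = (\<Sum>lam\<in>?T. \<Sum>xs\<in>{xs \<in> Lp l m. rev (sort xs) = lam}. Fl w e xs)"
    by (rule sum.group[OF fS fT img, symmetric])
  also have "\<dots> = (\<Sum>lam\<in>?T. of_nat (card (permutations_of_multiset (mset lam))) * Fl w e lam)"
  proof (rule sum.cong[OF refl])
    fix lam assume lam: "lam \<in> ?T"
    then have pl: "is_partition lam" "sum_list lam = m" "length lam = l" by (auto simp: partitions_of_def)
    have fib: "{xs \<in> Lp l m. rev (sort xs) = lam} = permutations_of_multiset (mset lam)"
    proof (intro equalityI subsetI)
      fix xs assume "xs \<in> {xs \<in> Lp l m. rev (sort xs) = lam}"
      then have "mset (rev (sort xs)) = mset lam" by simp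
      then have "mset xs = mset lam" by simp
      then show "xs \<in> permutations_of_multiset (mset lam)" by (simp add: permutations_of_multiset_def)
    next
      fix xs assume "xs \<in> permutations_of_multiset (mset lam)"
      then have ms: "mset xs = mset lam" by (simp add: permutations_of_multiset_def)
      have z: "0 \<notin> set xs" using arg_cong[OF ms, of set_mset] pl(1) unfolding is_partition_def by simp
      have "length xs = l" using arg_cong[OF ms, of size] pl(3) by simp
      moreover have "sum_list xs = m" using arg_cong[OF ms, of sum_mset] pl(2) by (simp add: sum_mset_sum_list)
      moreover have "rev (sort xs) = lam"
        using partition_mset_inj[OF rev_sort_partition[OF z] pl(1)] ms by simp
      ultimately show "xs \<in> {xs \<in> Lp l m. rev (sort xs) = lam}" using z by (simp add: Lp_def)
    qed
    have "(\<Sum>xs\<in>permutations_of_multiset (mset lam). Fl w e xs) = (\<Sum>xs\<in>permutations_of_multiset (mset lam). Fl w e lam)"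
      by (rule sum.cong[OF refl], rule Fl_perm) (simp add: permutations_of_multiset_def)
    then show "(\<Sum>xs\<in>{xs \<in> Lp l m. rev (sort xs) = lam}. Fl w e xs) = of_nat (card (permutations_of_multiset (mset lam))) * Fl w e lam"
      unfolding fib by simp
  qed
  finally show ?thesis .
qed

definition mfact :: "nat list \<Rightarrow> nat" where
  "mfact lam = (\<Prod>i\<in>set lam. fact (count_list lam i))"

lemma card_perm_mfact: "card (permutations_of_multiset (mset lam)) * mfact lam = fact (length lam)"
proof -
  have "card (permutations_of_multiset (mset lam)) * (\<Prod>x\<in>set_mset (mset lam). fact (count (mset lam) x)) = fact (size (mset lam))"
    by (rule card_permutations_of_multiset_aux)
  then show ?thesis unfolding mfact_def by (simp add: count_mset)
qed

lemma Zt_partitions: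
  assumes e0: "e 0 = 0"
  shows "Zt w e m = (\<Sum>lam\<in>partitions_of m. Fl w e lam / of_nat (mfact lam))"
proof -
  have "Zt w e m = (\<Sum>l\<le>m. \<Sum>lam\<in>{lam\<in>partitions_of m. length lam = l}. Fl w e lam / of_nat (mfact lam))"
    unfolding Zt_def
  proof (rule sum.cong[OF refl])
    fix l assume "l \<in> {..m}"
    have "Zs w e {..<l} m / fact l = (\<Sum>lam\<in>{lam\<in>partitions_of m. length lam = l}. of_nat (card (permutations_of_multiset (mset lam))) * Fl w e lam / fact l)"
      unfolding Zs_lists[of e w l m, OF e0] Lp_group sum_divide_distrib ..
    also have "\<dots> = (\<Sum>lam\<in>{lam\<in>partitions_of m. length lam = l}. Fl w e lam / of_nat (mfact lam))"
    proof (rule sum.cong[OF refl])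
      fix lam assume "lam \<in> {lam\<in>partitions_of m. length lam = l}"
      then have ll: "length lam = l" by simp
      have cm: "real (card (permutations_of_multiset (mset lam))) * real (mfact lam) = fact l"
        using card_perm_mfact[of lam] ll by (metis of_nat_fact of_nat_mult)
      have mf: "real (mfact lam) \<noteq> 0" unfolding mfact_def by (simp add: prod_zero_iff)
      show "of_nat (card (permutations_of_multiset (mset lam))) * Fl w e lam / fact l = Fl w e lam / of_nat (mfact lam)"
        using mf cm[symmetric] by (simp add: field_simps)
    qed
    finally show "Zs w e {..<l} m / fact l = (\<Sum>lam\<in>{lam\<in>partitions_of m. length lam = l}. Fl w e lam / of_nat (mfact lam))" .
  qed
  also have "\<dots> = (\<Sum>lam\<in>partitions_of m. Fl w e lam / of_nat (mfact lam))"
  proof (rule sum.group[OF finite_partitions_of finite_atMost])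
    show "length ` partitions_of m \<subseteq> {..m}" using partitions_sub by fastforce
  qed
  finally show ?thesis .
qed

definition innerR :: "nat \<Rightarrow> real \<Rightarrow> real" where
  "innerR a t = (\<Sum>j<a. real (Stirling a (a - j)) / (real ((a - 1) choose j) * fact j) * (- t) ^ (a - 1 - j))"

lemma of_rat_fact: "(of_rat (fact j) :: real) = fact j"
  by (metis of_nat_fact of_rat_of_nat_eq)

lemma inner_eval: "of_rat (poly (inner_poly a) q) = innerR a (of_rat q)"
  unfolding inner_poly_def innerR_def
  by (simp add: poly_sum of_rat_sum of_rat_mult of_rat_divide of_rat_power of_rat_minus of_rat_fact)

lemma kappa_inner: "of_nat a * kappa a t = t * innerR a t"
proof (cases a)
  case 0
  then show ?thesis by (simp add: kappa_def innerR_def)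
next
  case (Suc a')
  have "t * innerR a t = (\<Sum>j<a. real (Stirling a (a - j)) / (real ((a - 1) choose j) * fact j) * (- t) ^ (a - 1 - j) * t)"
    unfolding innerR_def by (simp add: sum_distrib_left mult_ac)
  also have "\<dots> = (\<Sum>r\<in>{1..a}. real (Stirling a r) / (real ((a - 1) choose (a - r)) * fact (a - r)) * (- t) ^ (r - 1) * t)"
  proof (rule sum.reindex_bij_witness[of _ "\<lambda>r. a - r" "\<lambda>j. a - j"])
    fix j assume j: "j \<in> {..<a}"
    show "a - (a - j) = j" using j by auto
    show "a - j \<in> {1..a}" using j by auto
    have "a - (a - j) = j" using j by auto
    then show "real (Stirling a (a - j)) / (real ((a - 1) choose (a - (a - j))) * fact (a - (a - j))) * (- t) ^ (a - j - 1) * t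
        = real (Stirling a (a - j)) / (real ((a - 1) choose j) * fact j) * (- t) ^ (a - 1 - j) * t"
      by simp
  next
    fix r assume r: "r \<in> {1..a}"
    show "a - (a - r) = r" using r by auto
    show "a - r \<in> {..<a}" using r by auto
  qed
  also have "\<dots> = (\<Sum>r\<in>{1..a}. of_nat a * ((-1) ^ (r - 1) * fact (r - 1) * t ^ r * real (Stirling a r) / fact a))"
  proof (rule sum.cong[OF refl])
    fix r assume r: "r \<in> {1..a}"
    have b: "real ((a - 1) choose (a - r)) = fact (a - 1) / (fact (a - r) * fact (r - 1))"
    proof -
      have "a - r \<le> a - 1" using r by auto
      moreover have "a - 1 - (a - r) = r - 1" using r by auto
      ultimately show ?thesis using binomial_fact[of "a - r" "a - 1"] by simp
    qed
    have fa: "(fact a :: real) = of_nat a * fact (a - 1)" using Suc by simp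
    have an: "real a \<noteq> 0" using Suc by simp
    have tp: "(- t) ^ (r - 1) * t = (-1) ^ (r - 1) * t ^ r"
    proof -
      obtain r' where r': "r = Suc r'" using r by (cases r) auto
      show ?thesis unfolding r' diff_Suc_1 power_minus[of t r'] power_Suc2 by (simp only: mult.assoc)
    qed
    show "real (Stirling a r) / (real ((a - 1) choose (a - r)) * fact (a - r)) * (- t) ^ (r - 1) * t
        = of_nat a * ((-1) ^ (r - 1) * fact (r - 1) * t ^ r * real (Stirling a r) / fact a)"
      unfolding b fa mult.assoc[of _ "(- t) ^ (r - 1)" t] tp using an by (simp add: field_simps)
  qed
  also have "\<dots> = of_nat a * kappa a t" unfolding kappa_def by (simp add: sum_distrib_left)
  finally show ?thesis by simp
qed

lemma of_rat_poly_map: "poly (map_poly of_rat p) (of_rat q :: real) = of_rat (poly p q)"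
  by (induction p) (simp_all add: map_poly_pCons of_rat_add of_rat_mult)

lemma mfact_of_rat: "(of_rat (\<Prod>i\<in>set lam. of_nat (fact (count_list lam i))) :: real) = of_nat (mfact lam)"
  unfolding mfact_def by (simp add: of_rat_prod of_rat_fact)

lemma rhs_eval_rat:
  "(of_rat (poly (rhs_poly lam) q) :: real) = ((-1) ^ (sum_list lam - length lam) / of_nat (mfact lam)) *
     (\<Sum>P | partition_on {..<length lam} P. (\<Prod>B\<in>P. fact (card B - 1)) * ((\<Prod>B\<in>P. innerR (block_weight lam B) (of_rat q)) * (of_rat q) ^ card P))"
proof -
  have "poly (rhs_poly lam) q = ((-1) ^ (sum_list lam - length lam) / (\<Prod>i\<in>set lam. of_nat (fact (count_list lam i)))) *
     (\<Sum>P | partition_on {..<length lam} P. (\<Prod>B\<in>P. of_nat (fact (card B - 1))) * ((\<Prod>B\<in>P. poly (inner_poly (block_weight lam B)) q) * q ^ card P))"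
    unfolding rhs_poly_def by (simp add: poly_sum poly_prod poly_monom)
  then show ?thesis
    by (simp add: of_rat_mult of_rat_divide of_rat_sum of_rat_prod of_rat_power of_rat_minus mfact_of_rat[symmetric] inner_eval of_rat_fact)
qed

lemma sum_over_partition:
  fixes g :: "nat \<Rightarrow> nat"
  assumes P: "partition_on I P" and fin: "finite I"
  shows "(\<Sum>B\<in>P. \<Sum>i\<in>B. g i) = (\<Sum>i\<in>I. g i)"
proof -
  have finB: "\<And>B. B \<in> P \<Longrightarrow> finite B" using P fin partition_onD1 finite_subset by (metis Union_upper)
  have "(\<Sum>i\<in>I. g i) = (\<Sum>i\<in>\<Union>P. g i)" using P partition_onD1 by metis
  also have "\<dots> = (\<Sum>B\<in>P. \<Sum>i\<in>B. g i)"
    using sum.Union_disjoint[of P g] finB P by (auto simp: partition_on_def disjoint_def)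
  finally show ?thesis by simp
qed

lemma PS_eval:
  assumes lam: "is_partition lam"
  shows "PS (wt t) {..<length lam} (\<lambda>i. lam ! i) = (-1) ^ (sum_list lam - length lam) *
     (\<Sum>P | partition_on {..<length lam} P. (\<Prod>B\<in>P. fact (card B - 1)) * ((\<Prod>B\<in>P. innerR (block_weight lam B) t) * t ^ card P))"
  unfolding PS_def sum_distrib_left
proof (rule sum.cong[OF refl])
  fix P assume "P \<in> {P. partition_on {..<length lam} P}"
  then have P: "partition_on {..<length lam} P" by simp
  have l_le: "length lam \<le> sum_list lam" using lam length_le_sum_list by (simp add: is_partition_def)
  have s1: "(\<Sum>B\<in>P. block_weight lam B) = sum_list lam"
    unfolding block_weight_def using sum_over_partition[OF P, of "\<lambda>i. lam ! i"] by (simp add: sum_list_sum_nth atLeast0LessThan)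
  have s2: "(\<Sum>B\<in>P. card B) = length lam"
    using sum_over_partition[OF P, of "\<lambda>i. 1"] by simp
  have sgn: "(\<Prod>B\<in>P. (-1::real) ^ (block_weight lam B + card B)) = (-1) ^ (sum_list lam - length lam)"
  proof -
    have "(\<Prod>B\<in>P. (-1::real) ^ (block_weight lam B + card B)) = (-1) ^ (\<Sum>B\<in>P. block_weight lam B + card B)"
      by (rule power_sum[symmetric])
    also have "(\<Sum>B\<in>P. block_weight lam B + card B) = (sum_list lam - length lam) + 2 * length lam"
      using s1 s2 l_le by (simp add: sum.distrib)
    finally show ?thesis by (simp add: power_add power_mult)
  qed
  have "(\<Prod>B\<in>P. wt t (\<Sum>i\<in>B. lam ! i) (card B)) = (\<Prod>B\<in>P. (-1) ^ (block_weight lam B + card B) * fact (card B - 1) * (t * innerR (block_weight lam B) t))"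
    unfolding wt_def kappa_inner block_weight_def ..
  also have "\<dots> = (\<Prod>B\<in>P. (-1::real) ^ (block_weight lam B + card B)) * (\<Prod>B\<in>P. fact (card B - 1)) * ((\<Prod>B\<in>P. innerR (block_weight lam B) t) * (\<Prod>B\<in>P. t))"
    by (simp add: prod.distrib mult_ac)
  also have "\<dots> = (-1) ^ (sum_list lam - length lam) * ((\<Prod>B\<in>P. fact (card B - 1)) * ((\<Prod>B\<in>P. innerR (block_weight lam B) t) * t ^ card P))"
    unfolding sgn by simp
  finally show "(\<Prod>B\<in>P. wt t (\<Sum>i\<in>B. lam ! i) (card B)) = (-1) ^ (sum_list lam - length lam) * ((\<Prod>B\<in>P. fact (card B - 1)) * ((\<Prod>B\<in>P. innerR (block_weight lam B) t) * t ^ card P))" .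
qed

lemma ew_c_part:
  assumes lam: "is_partition lam"
  shows "ew (ee n x) {..<length lam} (\<lambda>i. lam ! i) = c_part n lam x"
  unfolding ew_def c_part_def ee_def
proof (rule prod.cong[OF refl])
  fix i assume "i \<in> {..<length lam}"
  then have "lam ! i \<noteq> 0" using lam unfolding is_partition_def by (metis lessThan_iff nth_mem)
  then show "(if lam ! i = 0 then 0 else esym n (lam ! i) x) = esym n (lam ! i) x" by simp
qed

lemma Y_partitions:
  "Yfps n x (of_rat q) $ m = (\<Sum>lam\<in>partitions_of m. of_rat (poly (rhs_poly lam) q) * c_part n lam x)"
proof -
  have e0: "ee n x 0 = 0" by (simp add: ee_def)
  have "Yfps n x (of_rat q) $ m = (\<Sum>lam\<in>partitions_of m. Fl (wt (of_rat q)) (ee n x) lam / of_nat (mfact lam))"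
    using Y_eq_Zt Zt_partitions[of "ee n x" "wt (of_rat q)" m, OF e0] by simp
  also have "\<dots> = (\<Sum>lam\<in>partitions_of m. of_rat (poly (rhs_poly lam) q) * c_part n lam x)"
  proof (rule sum.cong[OF refl])
    fix lam assume "lam \<in> partitions_of m"
    then have lam: "is_partition lam" by (simp add: partitions_of_def)
    show "Fl (wt (of_rat q)) (ee n x) lam / of_nat (mfact lam) = of_rat (poly (rhs_poly lam) q) * c_part n lam x"
      unfolding Fl_def rhs_eval_rat PS_eval[OF lam] ew_c_part[OF lam] by simp
  qed
  finally show ?thesis .
qed

lemma Y_esym: "Yfps n x t $ m = (\<Sum>k\<le>n. t ^ k * (esym n k (\<lambda>i. fps_exp (x i) - 1)) $ m)"
proof -
  have "Yfps n x t = (\<Sum>k\<le>n. fps_const t ^ k * esym n k (\<lambda>i. fps_exp (x i) - 1))"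
    unfolding Yfps_def by (rule esym_gen)
  then show ?thesis by (simp add: fps_sum_nth fps_const_power)
qed

theorem theorem2p1:
  fixes b :: "nat \<Rightarrow> nat list \<Rightarrow> rat" and lam :: "nat list" and k :: nat
  assumes "ch_gamma_coeffs b"
    and "is_partition lam"
    and "k \<ge> 1"
  shows "b k lam = coeff (rhs_poly lam) k"
proof -
  define m where "m = sum_list lam"
  define n where "n = m + k"
  have lamM: "lam \<in> partitions_of m" using assms(2) by (simp add: partitions_of_def m_def)
  have key: "(\<Sum>mu\<in>partitions_of m. (of_rat (b k mu) - of_rat (coeff (rhs_poly mu) k)) * c_part n mu x) = 0" for x
  proof -
    define A where "A j = (esym n j (\<lambda>i. fps_exp (x i) - 1)) $ m" for j
    define P1 where "P1 = (\<Sum>j\<le>n. monom (A j) j)"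
    define P2 where "P2 = (\<Sum>mu\<in>partitions_of m. smult (c_part n mu x) (map_poly (of_rat :: rat \<Rightarrow> real) (rhs_poly mu)))"
    have ev: "poly P1 (of_nat N) = poly P2 (of_nat N)" for N
    proof -
      have "poly P1 (of_nat N) = Yfps n x (of_rat (of_nat N)) $ m"
        unfolding P1_def Y_esym A_def by (simp add: poly_sum poly_monom mult.commute)
      also have "\<dots> = (\<Sum>mu\<in>partitions_of m. of_rat (poly (rhs_poly mu) (of_nat N)) * c_part n mu x)"
        by (rule Y_partitions)
      also have "\<dots> = poly P2 (of_nat N)"
        unfolding P2_def using of_rat_poly_map[of _ "of_nat N"] by (simp add: poly_sum mult.commute)
      finally show ?thesis .
    qed
    have "P1 = P2"
    proof (rule ccontr)
      assume "P1 \<noteq> P2"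
      then have "P1 - P2 \<noteq> 0" by simp
      then have fin: "finite {t. poly (P1 - P2) t = 0}" by (rule poly_roots_finite)
      have "(\<nat> :: real set) \<subseteq> {t. poly (P1 - P2) t = 0}"
        using ev by (auto elim!: Nats_cases)
      then have "finite (\<nat> :: real set)" using fin finite_subset by blast
      then show False using Nats_infinite by blast
    qed
    then have "coeff P1 k = coeff P2 k" by simp
    moreover have "coeff P1 k = A k"
      unfolding P1_def using n_def by (simp add: coeff_sum)
    moreover have "coeff P2 k = (\<Sum>mu\<in>partitions_of m. c_part n mu x * of_rat (coeff (rhs_poly mu) k))"
      unfolding P2_def by (simp add: coeff_sum coeff_map_poly)
    moreover have "A k = (\<Sum>mu\<in>partitions_of m. of_rat (b k mu) * c_part n mu x)"
      using assms(1) assms(3) unfolding ch_gamma_coeffs_def A_def by blast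
    ultimately show ?thesis by (simp add: algebra_simps sum_subtractf mult.commute)
  qed
  have "of_rat (b k lam) - of_rat (coeff (rhs_poly lam) k) = (0::real)"
  proof (rule indep_aux[of "partitions_of m" n "\<lambda>mu. of_rat (b k mu) - of_rat (coeff (rhs_poly mu) k)" lam])
    show "finite (partitions_of m)" by (rule finite_partitions_of)
    show "\<forall>mu\<in>partitions_of m. is_partition mu \<and> (\<forall>a\<in>set mu. a \<le> n)"
      unfolding partitions_of_def n_def using member_le_sum_list by fastforce
    show "\<forall>x. (\<Sum>mu\<in>partitions_of m. (of_rat (b k mu) - of_rat (coeff (rhs_poly mu) k)) * c_part n mu x) = 0"
      using key by blast
    show "lam \<in> partitions_of m" by (rule lamM)
  qed
  then show ?thesis by simp
qed

end
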